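(* Let $\mathbf{k}$ be a field, $Q$ a finite connected quiver, $\Lambda=\mathbf{k}Q/\mathcal{J}^2$ ($\mathcal{J}$ the arrow ideal), $n\ge2$, and assume $\mathcal{C}\subseteq\operatorname{mod}\Lambda$ is an $n$-cluster tilting subcategory. Then every vertex $v\in Q_0$ satisfies $\delta^-(v)\le2$ and $\delta^+(v)\le2$.
   Context: Modules are finite-dimensional right modules. $\mathcal{C}$ is $n$-cluster tilting if it is functorially finite and $\mathcal{C}=\{X\mid \operatorname{Ext}^i(X,\mathcal{C})=0\ \forall 0<i<n\}=\{X\mid\operatorname{Ext}^i(\mathcal{C},X)=0\ \forall 0<i<n\}$. $\delta^-(v)$ and $\delta^+(v)$ are the numbers of arrows ending, resp. starting, at $v$. *)

theory Defs
  imports "Jordan_Normal_Form.Matrix"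
begin

record ('v,'a) quiver =
  verts :: "'v set"
  arrs  :: "'a set"
  src   :: "'a \<Rightarrow> 'v"
  tgt   :: "'a \<Rightarrow> 'v"

definition finite_quiver :: "('v,'a) quiver \<Rightarrow> bool" where
  "finite_quiver Q \<longleftrightarrow> finite (verts Q) \<and> finite (arrs Q) \<and>
     (\<forall>a\<in>arrs Q. src Q a \<in> verts Q \<and> tgt Q a \<in> verts Q)"

definition connected_quiver :: "('v,'a) quiver \<Rightarrow> bool" where
  "connected_quiver Q \<longleftrightarrow> verts Q \<noteq> {} \<and>
     (\<forall>u\<in>verts Q. \<forall>w\<in>verts Q.
        (u, w) \<in> ({(src Q a, tgt Q a) | a. a \<in> arrs Q} \<union> {(tgt Q a, src Q a) | a. a \<in> arrs Q})\<^sup>*)"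

definition in_degree :: "('v,'a) quiver \<Rightarrow> 'v \<Rightarrow> nat" where
  "in_degree Q v = card {a \<in> arrs Q. tgt Q a = v}"

definition out_degree :: "('v,'a) quiver \<Rightarrow> 'v \<Rightarrow> nat" where
  "out_degree Q v = card {a \<in> arrs Q. src Q a = v}"

text \<open>Finite-dimensional modules over kQ/J^2, as representations of Q with all
  compositions of two consecutive arrows zero: dimension vector and matrices
  (the matrix of arrow a maps k^(dim (src a)) to k^(dim (tgt a))).\<close>
type_synonym ('v,'a,'k) rep = "('v \<Rightarrow> nat) \<times> ('a \<Rightarrow> 'k mat)"

definition is_rep :: "('v,'a) quiver \<Rightarrow> ('v,'a,'k::field) rep \<Rightarrow> bool" where
  "is_rep Q X \<longleftrightarrow>
     (\<forall>v. v \<notin> verts Q \<longrightarrow> fst X v = 0) \<and>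
     (\<forall>a. a \<notin> arrs Q \<longrightarrow> snd X a = 0\<^sub>m 0 0) \<and>
     (\<forall>a\<in>arrs Q. snd X a \<in> carrier_mat (fst X (tgt Q a)) (fst X (src Q a))) \<and>
     (\<forall>a\<in>arrs Q. \<forall>b\<in>arrs Q. src Q b = tgt Q a \<longrightarrow>
        snd X b * snd X a = 0\<^sub>m (fst X (tgt Q b)) (fst X (src Q a)))"

definition rep_hom :: "('v,'a) quiver \<Rightarrow> ('v,'a,'k::field) rep \<Rightarrow> ('v,'a,'k) rep \<Rightarrow> ('v \<Rightarrow> 'k mat) \<Rightarrow> bool" where
  "rep_hom Q X Y f \<longleftrightarrow>
     (\<forall>v\<in>verts Q. f v \<in> carrier_mat (fst Y v) (fst X v)) \<and>
     (\<forall>a\<in>arrs Q. f (tgt Q a) * snd X a = snd Y a * f (src Q a))"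

definition hom_inj :: "('v,'a) quiver \<Rightarrow> ('v,'a,'k::field) rep \<Rightarrow> ('v,'a,'k) rep \<Rightarrow> ('v \<Rightarrow> 'k mat) \<Rightarrow> bool" where
  "hom_inj Q X Y f \<longleftrightarrow> (\<forall>v\<in>verts Q. \<forall>x\<in>carrier_vec (fst X v).
      f v *\<^sub>v x = 0\<^sub>v (fst Y v) \<longrightarrow> x = 0\<^sub>v (fst X v))"

definition hom_surj :: "('v,'a) quiver \<Rightarrow> ('v,'a,'k::field) rep \<Rightarrow> ('v,'a,'k) rep \<Rightarrow> ('v \<Rightarrow> 'k mat) \<Rightarrow> bool" where
  "hom_surj Q X Y f \<longleftrightarrow> (\<forall>v\<in>verts Q. \<forall>y\<in>carrier_vec (fst Y v).
      \<exists>x\<in>carrier_vec (fst X v). f v *\<^sub>v x = y)"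

definition ses :: "('v,'a) quiver \<Rightarrow> ('v,'a,'k::field) rep \<Rightarrow> ('v,'a,'k) rep \<Rightarrow> ('v,'a,'k) rep
    \<Rightarrow> ('v \<Rightarrow> 'k mat) \<Rightarrow> ('v \<Rightarrow> 'k mat) \<Rightarrow> bool" where
  "ses Q X E Z f g \<longleftrightarrow> is_rep Q X \<and> is_rep Q E \<and> is_rep Q Z \<and>
     rep_hom Q X E f \<and> rep_hom Q E Z g \<and> hom_inj Q X E f \<and> hom_surj Q E Z g \<and>
     (\<forall>v\<in>verts Q. \<forall>e\<in>carrier_vec (fst E v).
        g v *\<^sub>v e = 0\<^sub>v (fst Z v) \<longleftrightarrow> (\<exists>x\<in>carrier_vec (fst X v). f v *\<^sub>v x = e))"

definition ses_splits :: "('v,'a) quiver \<Rightarrow> ('v,'a,'k::field) rep \<Rightarrow> ('v,'a,'k) rep \<Rightarrow> ('v \<Rightarrow> 'k mat) \<Rightarrow> bool" where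
  "ses_splits Q X E f \<longleftrightarrow> (\<exists>r. rep_hom Q E X r \<and> (\<forall>v\<in>verts Q. r v * f v = 1\<^sub>m (fst X v)))"

definition projective_rep :: "('v,'a) quiver \<Rightarrow> ('v,'a,'k::field) rep \<Rightarrow> bool" where
  "projective_rep Q P \<longleftrightarrow> is_rep Q P \<and>
     (\<forall>E Z g h. is_rep Q E \<and> is_rep Q Z \<and> rep_hom Q E Z g \<and> hom_surj Q E Z g \<and> rep_hom Q P Z h
        \<longrightarrow> (\<exists>l. rep_hom Q P E l \<and> (\<forall>v\<in>verts Q. g v * l v = h v)))"

text \<open>ext_zero Q i X Y means Ext^i(X,Y) = 0. Ext^0 = Hom; Ext^1 vanishes iff every
  extension of X by Y splits; higher Ext by dimension shifting along a
  projective presentation 0 -> K -> P -> X -> 0.\<close>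
fun ext_zero :: "('v,'a) quiver \<Rightarrow> nat \<Rightarrow> ('v,'a,'k::field) rep \<Rightarrow> ('v,'a,'k) rep \<Rightarrow> bool" where
  "ext_zero Q 0 X Y = (\<forall>h. rep_hom Q X Y h \<longrightarrow> (\<forall>v\<in>verts Q. h v = 0\<^sub>m (fst Y v) (fst X v)))"
| "ext_zero Q (Suc 0) X Y = (\<forall>E f g. ses Q Y E X f g \<longrightarrow> ses_splits Q Y E f)"
| "ext_zero Q (Suc (Suc i)) X Y = (\<exists>K P f g. projective_rep Q P \<and> ses Q K P X f g \<and> ext_zero Q (Suc i) K Y)"

definition right_approx :: "('v,'a) quiver \<Rightarrow> ('v,'a,'k::field) rep set \<Rightarrow> ('v,'a,'k) rep \<Rightarrow> ('v,'a,'k) rep \<Rightarrow> ('v \<Rightarrow> 'k mat) \<Rightarrow> bool" where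
  "right_approx Q \<C> X C f \<longleftrightarrow> C \<in> \<C> \<and> rep_hom Q C X f \<and>
     (\<forall>C'\<in>\<C>. \<forall>h. rep_hom Q C' X h \<longrightarrow> (\<exists>u. rep_hom Q C' C u \<and> (\<forall>v\<in>verts Q. f v * u v = h v)))"

definition left_approx :: "('v,'a) quiver \<Rightarrow> ('v,'a,'k::field) rep set \<Rightarrow> ('v,'a,'k) rep \<Rightarrow> ('v,'a,'k) rep \<Rightarrow> ('v \<Rightarrow> 'k mat) \<Rightarrow> bool" where
  "left_approx Q \<C> X C f \<longleftrightarrow> C \<in> \<C> \<and> rep_hom Q X C f \<and>
     (\<forall>C'\<in>\<C>. \<forall>h. rep_hom Q X C' h \<longrightarrow> (\<exists>u. rep_hom Q C C' u \<and> (\<forall>v\<in>verts Q. u v * f v = h v)))"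

definition functorially_finite :: "('v,'a) quiver \<Rightarrow> ('v,'a,'k::field) rep set \<Rightarrow> bool" where
  "functorially_finite Q \<C> \<longleftrightarrow> \<C> \<subseteq> {X. is_rep Q X} \<and>
     (\<forall>X. is_rep Q X \<longrightarrow> (\<exists>C f. right_approx Q \<C> X C f) \<and> (\<exists>C f. left_approx Q \<C> X C f))"

definition n_cluster_tilting :: "('v,'a) quiver \<Rightarrow> nat \<Rightarrow> ('v,'a,'k::field) rep set \<Rightarrow> bool" where
  "n_cluster_tilting Q n \<C> \<longleftrightarrow> functorially_finite Q \<C> \<and>
     \<C> = {X. is_rep Q X \<and> (\<forall>i. 0 < i \<and> i < n \<longrightarrow> (\<forall>C\<in>\<C>. ext_zero Q i X C))} \<and>
     \<C> = {X. is_rep Q X \<and> (\<forall>i. 0 < i \<and> i < n \<longrightarrow> (\<forall>C\<in>\<C>. ext_zero Q i C X))}"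

end

theory Submission
  imports Defs "Jordan_Normal_Form.Gauss_Jordan_Elimination"
begin

lemma left_inverse_exists:
  fixes A :: "'k::field mat"
  assumes A: "A \<in> carrier_mat m n"
    and inj: "\<And>x. x \<in> carrier_vec n \<Longrightarrow> A *\<^sub>v x = 0\<^sub>v m \<Longrightarrow> x = 0\<^sub>v n"
  shows "\<exists>L\<in>carrier_mat n m. L * A = 1\<^sub>m n"
proof -
  define C where "C = gauss_jordan_single A"
  note gj = gauss_jordan_single[OF A C_def[symmetric]]
  from gj(4) obtain P Q where CPA: "C = P * A" and P: "P \<in> carrier_mat m m" by blast
  have Cc: "C \<in> carrier_mat m n" by (rule gj(2))
  from gj(3) obtain f where piv: "pivot_fun C f n" unfolding row_echelon_form_def using Cc by auto
  have dC: "dim_row C = m" using Cc by auto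
  note pd = pivot_funD[OF dC piv]
  have all: "snd ` set (pivot_positions C) = {0..<n}"
  proof (rule ccontr)
    assume ne: "snd ` set (pivot_positions C) \<noteq> {0..<n}"
    note fb = find_base_vector[OF gj(3) Cc ne]
    have "A *\<^sub>v find_base_vector C = 0\<^sub>v m" using gj(1)[OF fb(1)] fb(3) by simp
    then have "find_base_vector C = 0\<^sub>v n" using inj fb(1) by blast
    with fb(2) show False by simp
  qed
  have surjf: "\<exists>i<m. f i = j" if "j < n" for j
  proof -
    from that all have "j \<in> snd ` set (pivot_positions C)" by auto
    then show ?thesis using pivot_positions(1)[OF Cc piv] by auto
  qed
  have injf: "i = i'" if "i < m" "i' < m" "f i = f i'" "f i < n" for i i'
  proof (rule ccontr)
    assume "i \<noteq> i'"
    then have "C $$ (i', f i) = 0" using pd(5)[of i i'] that by auto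
    moreover have "C $$ (i', f i') = 1" using pd(4)[of i'] that by auto
    ultimately show False using that by simp
  qed
  define S where "S = mat n m (\<lambda>(j,i). if f i = j then (1::'k) else 0)"
  have SC: "S * C = 1\<^sub>m n"
  proof (rule eq_matI)
    fix j k assume j: "j < dim_row (1\<^sub>m n :: 'k mat)" and k: "k < dim_col (1\<^sub>m n :: 'k mat)"
    then have j: "j < n" and k: "k < n" by auto
    obtain i where i: "i < m" "f i = j" using surjf[OF j] by auto
    have "(S * C) $$ (j,k) = (\<Sum>i'<m. (if f i' = j then 1 else 0) * C $$ (i',k))"
      using j k Cc by (simp add: S_def scalar_prod_def lessThan_atLeast0)
    also have "\<dots> = (\<Sum>i'\<in>{i}. (if f i' = j then 1 else 0) * C $$ (i',k))"
      apply (rule sum.mono_neutral_right) using i injf j by auto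
    also have "\<dots> = C $$ (i,k)" using i by simp
    also have "\<dots> = (1\<^sub>m n :: 'k mat) $$ (j,k)"
    proof -
      obtain i2 where i2: "i2 < m" "f i2 = k" using surjf[OF k] by auto
      show ?thesis
      proof (cases "i = i2")
        case True then show ?thesis using pd(4)[of i] i i2 j k by auto
      next
        case False
        then have "j \<noteq> k" using injf i i2 k by metis
        then show ?thesis using pd(5)[of i2 i] i i2 j k False by auto
      qed
    qed
    finally show "(S * C) $$ (j,k) = (1\<^sub>m n :: 'k mat) $$ (j,k)" .
  qed (insert Cc, auto simp: S_def)
  have Sc: "S \<in> carrier_mat n m" by (simp add: S_def)
  have "(S * P) * A = 1\<^sub>m n" using SC CPA Sc P A by (simp add: assoc_mult_mat[of S n m P m A n])
  then show ?thesis using Sc P by (intro bexI[of _ "S * P"]) auto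
qed

lemma mat_eq_vecI:
  fixes A B :: "'k::field mat"
  assumes A: "A \<in> carrier_mat m n" and B: "B \<in> carrier_mat m n"
    and eq: "\<And>v. v \<in> carrier_vec n \<Longrightarrow> A *\<^sub>v v = B *\<^sub>v v"
  shows "A = B"
proof (rule eq_matI)
  fix i j assume i: "i < dim_row B" and j: "j < dim_col B"
  have "A *\<^sub>v unit_vec n j = B *\<^sub>v unit_vec n j" using eq by simp
  then have "(A *\<^sub>v unit_vec n j) $ i = (B *\<^sub>v unit_vec n j) $ i" by simp
  then show "A $$ (i,j) = B $$ (i,j)" using i j A B by (simp add: row_def)
qed (insert A B, auto)

lemma inj_vec_cancel:
  fixes f :: "'k::field mat"
  assumes f: "f \<in> carrier_mat m n"
    and inj: "\<And>x. x \<in> carrier_vec n \<Longrightarrow> f *\<^sub>v x = 0\<^sub>v m \<Longrightarrow> x = 0\<^sub>v n"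
    and x: "x \<in> carrier_vec n" and y: "y \<in> carrier_vec n" and eq: "f *\<^sub>v x = f *\<^sub>v y"
  shows "x = y"
proof -
  have "f *\<^sub>v (x - y) = f *\<^sub>v x - f *\<^sub>v y" using f x y by (simp add: mult_minus_distrib_mat_vec)
  also have "\<dots> = 0\<^sub>v m" using eq f y by (simp add: minus_cancel_vec)
  finally have d: "x - y = 0\<^sub>v n" using inj x y by simp
  show ?thesis
  proof (rule eq_vecI)
    fix i assume "i < dim_vec y"
    then have "(x - y) $ i = 0" using d y by simp
    then show "x $ i = y $ i" using \<open>i < dim_vec y\<close> x y by simp
  qed (insert x y, auto)
qed

lemma mult_mat_vec_zero_right[simp]:
  "A \<in> carrier_mat m n \<Longrightarrow> A *\<^sub>v 0\<^sub>v n = (0\<^sub>v m :: 'k::field vec)"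
  by (intro eq_vecI, auto simp: row_def)

lemma zero_mat_mult_vec': "x \<in> carrier_vec m \<Longrightarrow> 0\<^sub>m n m *\<^sub>v x = (0\<^sub>v n :: 'k::field vec)"
proof (rule eq_vecI)
  fix i assume x: "x \<in> carrier_vec m" and i: "i < dim_vec (0\<^sub>v n :: 'k vec)"
  have "(0\<^sub>m n m *\<^sub>v x) $ i = row (0\<^sub>m n m) i \<bullet> x" using i by simp
  also have "row (0\<^sub>m n m) i = 0\<^sub>v m" using i by (intro eq_vecI) auto
  also have "0\<^sub>v m \<bullet> x = 0" using x by simp
  finally show "(0\<^sub>m n m *\<^sub>v x) $ i = 0\<^sub>v n $ i" using i by simp
qed simp

lemma one_mult_mat_vec': "dim_vec e = n \<Longrightarrow> 1\<^sub>m n *\<^sub>v e = (e :: 'k::field vec)"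
  by (rule one_mult_mat_vec[OF carrier_vecI])

lemma rep_arr_carrier:
  "is_rep Q X \<Longrightarrow> a \<in> arrs Q \<Longrightarrow> snd X a \<in> carrier_mat (fst X (tgt Q a)) (fst X (src Q a))"
  by (simp add: is_rep_def)

lemma fq_src: "finite_quiver Q \<Longrightarrow> a \<in> arrs Q \<Longrightarrow> src Q a \<in> verts Q"
  and fq_tgt: "finite_quiver Q \<Longrightarrow> a \<in> arrs Q \<Longrightarrow> tgt Q a \<in> verts Q"
  by (auto simp: finite_quiver_def)

lemma proj_split:
  fixes P C E :: "('v,'a,'k::field) rep"
  assumes fq: "finite_quiver Q" and proj: "projective_rep Q P" and s: "ses Q C E P f g"
  shows "ses_splits Q C E f"
proof -
  from s have rC: "is_rep Q C" and rE: "is_rep Q E" and rP: "is_rep Q P"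
    and hf: "rep_hom Q C E f" and hg: "rep_hom Q E P g" and fi: "hom_inj Q C E f"
    and gs: "hom_surj Q E P g"
    and ex: "\<And>v e. v \<in> verts Q \<Longrightarrow> e \<in> carrier_vec (fst E v) \<Longrightarrow>
        g v *\<^sub>v e = 0\<^sub>v (fst P v) \<longleftrightarrow> (\<exists>x\<in>carrier_vec (fst C v). f v *\<^sub>v x = e)"
    unfolding ses_def by blast+
  have idh: "rep_hom Q P P (\<lambda>v. 1\<^sub>m (fst P v))" using rP unfolding rep_hom_def is_rep_def by auto
  from proj rE rP hg gs idh obtain sc where hs: "rep_hom Q P E sc"
    and gsc: "\<And>v. v \<in> verts Q \<Longrightarrow> g v * sc v = 1\<^sub>m (fst P v)"
    unfolding projective_rep_def by blast
  have fc: "\<And>v. v \<in> verts Q \<Longrightarrow> f v \<in> carrier_mat (fst E v) (fst C v)" using hf by (simp add: rep_hom_def)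
  have gc: "\<And>v. v \<in> verts Q \<Longrightarrow> g v \<in> carrier_mat (fst P v) (fst E v)" using hg by (simp add: rep_hom_def)
  have sc_c: "\<And>v. v \<in> verts Q \<Longrightarrow> sc v \<in> carrier_mat (fst E v) (fst P v)" using hs by (simp add: rep_hom_def)
  have finj: "\<And>v x. v \<in> verts Q \<Longrightarrow> x \<in> carrier_vec (fst C v) \<Longrightarrow> f v *\<^sub>v x = 0\<^sub>v (fst E v) \<Longrightarrow> x = 0\<^sub>v (fst C v)"
    using fi by (simp add: hom_inj_def)
  have "\<forall>v\<in>verts Q. \<exists>L\<in>carrier_mat (fst C v) (fst E v). L * f v = 1\<^sub>m (fst C v)"
    using left_inverse_exists[OF fc finj] by blast
  then obtain L where Lc: "\<And>v. v \<in> verts Q \<Longrightarrow> L v \<in> carrier_mat (fst C v) (fst E v)"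
    and Lf: "\<And>v. v \<in> verts Q \<Longrightarrow> L v * f v = 1\<^sub>m (fst C v)" by metis
  define r where "r v = L v * (1\<^sub>m (fst E v) - sc v * g v)" for v
  have rc: "r v \<in> carrier_mat (fst C v) (fst E v)" if "v \<in> verts Q" for v
    using Lc[OF that] sc_c[OF that] gc[OF that] unfolding r_def by auto
  have key: "f v *\<^sub>v (r v *\<^sub>v e) = e - sc v *\<^sub>v (g v *\<^sub>v e)"
    if v: "v \<in> verts Q" and e: "e \<in> carrier_vec (fst E v)" for v e
  proof -
    note c = Lc[OF v] sc_c[OF v] gc[OF v] fc[OF v]
    define e' where "e' = e - sc v *\<^sub>v (g v *\<^sub>v e)"
    have e'c: "e' \<in> carrier_vec (fst E v)" using c e unfolding e'_def by auto
    have "g v *\<^sub>v e' = g v *\<^sub>v e - (g v * sc v) *\<^sub>v (g v *\<^sub>v e)"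
      unfolding e'_def using c e by (simp add: mult_minus_distrib_mat_vec)
    also have "\<dots> = 0\<^sub>v (fst P v)" using gsc[OF v] c e by (simp add: minus_cancel_vec)
    finally obtain x where x: "x \<in> carrier_vec (fst C v)" and fx: "f v *\<^sub>v x = e'"
      using ex[OF v e'c] by blast
    have "r v *\<^sub>v e = L v *\<^sub>v ((1\<^sub>m (fst E v) - sc v * g v) *\<^sub>v e)"
      unfolding r_def using c e by (subst assoc_mult_mat_vec) auto
    also have "(1\<^sub>m (fst E v) - sc v * g v) *\<^sub>v e = e'"
      unfolding e'_def using c e
      by (subst minus_mult_distrib_mat_vec[of _ "fst E v" "fst E v"], auto)
    also have "L v *\<^sub>v e' = x" using fx[symmetric] Lf[OF v] c x by (simp flip: assoc_mult_mat_vec)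
    finally show ?thesis using fx e'_def by simp
  qed
  have rhom: "rep_hom Q E C r"
    unfolding rep_hom_def
  proof (intro conjI ballI)
    fix v assume "v \<in> verts Q" then show "r v \<in> carrier_mat (fst C v) (fst E v)" by (rule rc)
  next
    fix a assume a: "a \<in> arrs Q"
    define s0 where "s0 = src Q a"
    define t0 where "t0 = tgt Q a"
    have s0: "s0 \<in> verts Q" and t0: "t0 \<in> verts Q" using fq a by (auto simp: s0_def t0_def finite_quiver_def)
    have Ea: "snd E a \<in> carrier_mat (fst E t0) (fst E s0)" using rep_arr_carrier[OF rE a] by (simp add: s0_def t0_def)
    have Ca: "snd C a \<in> carrier_mat (fst C t0) (fst C s0)" using rep_arr_carrier[OF rC a] by (simp add: s0_def t0_def)
    have Pa: "snd P a \<in> carrier_mat (fst P t0) (fst P s0)" using rep_arr_carrier[OF rP a] by (simp add: s0_def t0_def)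
    have gE: "g t0 * snd E a = snd P a * g s0" using hg a by (simp add: rep_hom_def s0_def t0_def)
    have sP: "sc t0 * snd P a = snd E a * sc s0" using hs a by (simp add: rep_hom_def s0_def t0_def)
    have fC: "f t0 * snd C a = snd E a * f s0" using hf a by (simp add: rep_hom_def s0_def t0_def)
    note cs = Lc[OF s0] sc_c[OF s0] gc[OF s0] fc[OF s0] rc[OF s0]
    note ct = Lc[OF t0] sc_c[OF t0] gc[OF t0] fc[OF t0] rc[OF t0]
    have "r t0 * snd E a = snd C a * r s0"
    proof (rule mat_eq_vecI)
      show "r t0 * snd E a \<in> carrier_mat (fst C t0) (fst E s0)" using ct Ea by auto
      show "snd C a * r s0 \<in> carrier_mat (fst C t0) (fst E s0)" using cs Ca by auto
      fix e :: "'k vec" assume e: "e \<in> carrier_vec (fst E s0)"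
      have Eae: "snd E a *\<^sub>v e \<in> carrier_vec (fst E t0)" using Ea e by auto
      have "f t0 *\<^sub>v (r t0 *\<^sub>v (snd E a *\<^sub>v e)) = snd E a *\<^sub>v e - sc t0 *\<^sub>v (g t0 *\<^sub>v (snd E a *\<^sub>v e))"
        by (rule key[OF t0 Eae])
      also have "g t0 *\<^sub>v (snd E a *\<^sub>v e) = snd P a *\<^sub>v (g s0 *\<^sub>v e)"
      proof -
        have "g t0 *\<^sub>v (snd E a *\<^sub>v e) = (g t0 * snd E a) *\<^sub>v e" using ct Ea e by simp
        also have "\<dots> = (snd P a * g s0) *\<^sub>v e" using gE by simp
        also have "\<dots> = snd P a *\<^sub>v (g s0 *\<^sub>v e)" using Pa cs e by simp
        finally show ?thesis .
      qed
      also have "sc t0 *\<^sub>v (snd P a *\<^sub>v (g s0 *\<^sub>v e)) = snd E a *\<^sub>v (sc s0 *\<^sub>v (g s0 *\<^sub>v e))"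
      proof -
        have ge: "g s0 *\<^sub>v e \<in> carrier_vec (fst P s0)" using cs e by auto
        have "sc t0 *\<^sub>v (snd P a *\<^sub>v (g s0 *\<^sub>v e)) = (sc t0 * snd P a) *\<^sub>v (g s0 *\<^sub>v e)" using ct Pa ge by simp
        also have "\<dots> = (snd E a * sc s0) *\<^sub>v (g s0 *\<^sub>v e)" using sP by simp
        also have "\<dots> = snd E a *\<^sub>v (sc s0 *\<^sub>v (g s0 *\<^sub>v e))" using Ea cs ge by simp
        finally show ?thesis .
      qed
      also have "snd E a *\<^sub>v e - snd E a *\<^sub>v (sc s0 *\<^sub>v (g s0 *\<^sub>v e)) = snd E a *\<^sub>v (e - sc s0 *\<^sub>v (g s0 *\<^sub>v e))"
        using Ea cs e by (simp add: mult_minus_distrib_mat_vec)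
      also have "e - sc s0 *\<^sub>v (g s0 *\<^sub>v e) = f s0 *\<^sub>v (r s0 *\<^sub>v e)" using key[OF s0 e] by simp
      also have "snd E a *\<^sub>v (f s0 *\<^sub>v (r s0 *\<^sub>v e)) = f t0 *\<^sub>v (snd C a *\<^sub>v (r s0 *\<^sub>v e))"
      proof -
        have re: "r s0 *\<^sub>v e \<in> carrier_vec (fst C s0)" using cs e by auto
        have "snd E a *\<^sub>v (f s0 *\<^sub>v (r s0 *\<^sub>v e)) = (snd E a * f s0) *\<^sub>v (r s0 *\<^sub>v e)" using Ea cs re by simp
        also have "\<dots> = (f t0 * snd C a) *\<^sub>v (r s0 *\<^sub>v e)" using fC by simp
        also have "\<dots> = f t0 *\<^sub>v (snd C a *\<^sub>v (r s0 *\<^sub>v e))" using ct Ca re by simp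
        finally show ?thesis .
      qed
      finally have eq: "f t0 *\<^sub>v (r t0 *\<^sub>v (snd E a *\<^sub>v e)) = f t0 *\<^sub>v (snd C a *\<^sub>v (r s0 *\<^sub>v e))" .
      have "r t0 *\<^sub>v (snd E a *\<^sub>v e) = snd C a *\<^sub>v (r s0 *\<^sub>v e)"
        by (rule inj_vec_cancel[OF fc[OF t0] finj[OF t0] _ _ eq], insert ct cs Ea Ca e, auto)
      then show "(r t0 * snd E a) *\<^sub>v e = (snd C a * r s0) *\<^sub>v e"
        using ct cs Ea Ca e by simp
    qed
    then show "r (tgt Q a) * snd E a = snd C a * r (src Q a)" by (simp add: s0_def t0_def)
  qed
  have "r v * f v = 1\<^sub>m (fst C v)" if v: "v \<in> verts Q" for v
  proof (rule mat_eq_vecI)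
    note c = Lc[OF v] sc_c[OF v] gc[OF v] fc[OF v] rc[OF v]
    show "r v * f v \<in> carrier_mat (fst C v) (fst C v)" using c by auto
    show "1\<^sub>m (fst C v) \<in> carrier_mat (fst C v) (fst C v)" by auto
    fix x :: "'k vec" assume x: "x \<in> carrier_vec (fst C v)"
    have fx: "f v *\<^sub>v x \<in> carrier_vec (fst E v)" using c x by auto
    have g0: "g v *\<^sub>v (f v *\<^sub>v x) = 0\<^sub>v (fst P v)" using ex[OF v fx] x by blast
    have eqn: "f v *\<^sub>v (r v *\<^sub>v (f v *\<^sub>v x)) = f v *\<^sub>v x"
      using key[OF v fx] g0 c fx by simp
    have rfx: "r v *\<^sub>v (f v *\<^sub>v x) \<in> carrier_vec (fst C v)" using c fx by auto
    have "r v *\<^sub>v (f v *\<^sub>v x) = x"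
      by (rule inj_vec_cancel[OF fc[OF v] finj[OF v] rfx x eqn])
    then show "(r v * f v) *\<^sub>v x = 1\<^sub>m (fst C v) *\<^sub>v x" using c x by simp
  qed
  then show ?thesis using rhom unfolding ses_splits_def by blast
qed

definition zrep :: "('v,'a,'k::field) rep" where
  "zrep = (\<lambda>_. 0, \<lambda>_. 0\<^sub>m 0 0)"

lemma zrep_is_rep: "is_rep Q zrep"
  unfolding is_rep_def zrep_def by auto

lemma mat_0col_eq: "A \<in> carrier_mat m 0 \<Longrightarrow> B \<in> carrier_mat m 0 \<Longrightarrow> A = B"
  by (intro eq_matI, auto)

lemma vec_0_eq: "x \<in> carrier_vec 0 \<Longrightarrow> x = 0\<^sub>v 0"
  by (intro eq_vecI, auto)

lemma zrep_proj: "projective_rep Q (zrep :: ('v,'a,'k::field) rep)"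
  unfolding projective_rep_def
proof (intro conjI allI impI)
  show "is_rep Q (zrep :: ('v,'a,'k::field) rep)" by (rule zrep_is_rep)
  fix E Z :: "('v,'a,'k) rep" and g h
  assume a: "is_rep Q E \<and> is_rep Q Z \<and> rep_hom Q E Z g \<and> hom_surj Q E Z g \<and> rep_hom Q zrep Z h"
  define l where "l v = (0\<^sub>m (fst E v) 0 :: 'k mat)" for v :: 'v
  have "rep_hom Q zrep E l"
    unfolding rep_hom_def
  proof (intro conjI ballI)
    fix v assume "v \<in> verts Q" then show "l v \<in> carrier_mat (fst E v) (fst zrep v)" by (simp add: l_def zrep_def)
  next
    fix a assume aa: "a \<in> arrs Q"
    have Ea: "snd E a \<in> carrier_mat (fst E (tgt Q a)) (fst E (src Q a))" using a aa by (simp add: is_rep_def)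
    show "l (tgt Q a) * snd zrep a = snd E a * l (src Q a)"
      using mult_carrier_mat[OF Ea zero_carrier_mat[of "fst E (src Q a)" 0]]
      by (intro mat_0col_eq[of _ "fst E (tgt Q a)"], auto simp: l_def zrep_def)
  qed
  moreover have "\<forall>v\<in>verts Q. g v * l v = h v"
  proof
    fix v assume v: "v \<in> verts Q"
    have "g v \<in> carrier_mat (fst Z v) (fst E v)" using a v by (simp add: rep_hom_def)
    moreover have "h v \<in> carrier_mat (fst Z v) 0" using a v by (simp add: rep_hom_def zrep_def)
    ultimately show "g v * l v = h v" by (intro mat_0col_eq[of _ "fst Z v"], auto simp: l_def)
  qed
  ultimately show "\<exists>l. rep_hom Q zrep E l \<and> (\<forall>v\<in>verts Q. g v * l v = h v)" by blast
qed

lemma ses_zrep_proj: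
  assumes P: "is_rep Q (P :: ('v,'a,'k::field) rep)"
  shows "ses Q zrep P P (\<lambda>v. 0\<^sub>m (fst P v) 0) (\<lambda>v. 1\<^sub>m (fst P v))"
  unfolding ses_def
proof (intro conjI)
  show "is_rep Q (zrep :: ('v,'a,'k) rep)" by (rule zrep_is_rep)
  show "is_rep Q P" "is_rep Q P" by (rule P)+
  show "rep_hom Q zrep P (\<lambda>v. 0\<^sub>m (fst P v) 0)"
    unfolding rep_hom_def
  proof (intro conjI ballI)
    fix a assume "a \<in> arrs Q"
    then have Pa: "snd P a \<in> carrier_mat (fst P (tgt Q a)) (fst P (src Q a))" using rep_arr_carrier[OF P] by blast
    show "0\<^sub>m (fst P (tgt Q a)) 0 * snd zrep a = snd P a * 0\<^sub>m (fst P (src Q a)) 0"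
      using mult_carrier_mat[OF Pa zero_carrier_mat[of "fst P (src Q a)" 0]]
      by (intro mat_0col_eq[of _ "fst P (tgt Q a)"], auto simp: zrep_def)
  qed (auto simp: zrep_def)
  show "rep_hom Q P P (\<lambda>v. 1\<^sub>m (fst P v))"
    unfolding rep_hom_def
  proof (intro conjI ballI)
    fix a assume "a \<in> arrs Q"
    then have Pa: "snd P a \<in> carrier_mat (fst P (tgt Q a)) (fst P (src Q a))" using rep_arr_carrier[OF P] by blast
    show "1\<^sub>m (fst P (tgt Q a)) * snd P a = snd P a * 1\<^sub>m (fst P (src Q a))"
      by (simp add: left_mult_one_mat[OF Pa] right_mult_one_mat[OF Pa])
  qed auto
  show "hom_inj Q zrep P (\<lambda>v. 0\<^sub>m (fst P v) 0)"
    unfolding hom_inj_def zrep_def by (auto intro: vec_0_eq)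
  show "hom_surj Q P P (\<lambda>v. 1\<^sub>m (fst P v))"
    unfolding hom_surj_def by auto
  show "\<forall>v\<in>verts Q. \<forall>e\<in>carrier_vec (fst P v). (1\<^sub>m (fst P v) *\<^sub>v e = (0\<^sub>v (fst P v) :: 'k vec)) =
      (\<exists>x\<in>carrier_vec (fst (zrep :: ('v,'a,'k) rep) v). 0\<^sub>m (fst P v) 0 *\<^sub>v x = e)"
  proof (intro ballI)
    fix v and e :: "'k vec" assume v: "v \<in> verts Q" and e: "e \<in> carrier_vec (fst P v)"
    have "1\<^sub>m (fst P v) *\<^sub>v e = e" using e by (simp add: one_mult_mat_vec')
    moreover have "(0\<^sub>v 0 :: 'k vec) \<in> carrier_vec (fst (zrep :: ('v,'a,'k) rep) v)" by (simp add: zrep_def)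
    moreover have "0\<^sub>m (fst P v) 0 *\<^sub>v (x :: 'k vec) = 0\<^sub>v (fst P v)" if "x \<in> carrier_vec 0" for x
      using that by (simp add: zero_mat_mult_vec')
    ultimately show "(1\<^sub>m (fst P v) *\<^sub>v e = 0\<^sub>v (fst P v)) =
      (\<exists>x\<in>carrier_vec (fst (zrep :: ('v,'a,'k) rep) v). 0\<^sub>m (fst P v) 0 *\<^sub>v x = e)"
      by (intro iffI; (elim bexE)?; auto intro: zero_carrier_vec)
  qed
qed

lemma proj_ext_zero:
  assumes fq: "finite_quiver Q"
  shows "projective_rep Q P \<Longrightarrow> ext_zero Q (Suc i) P C"
proof (induction i arbitrary: P)
  case 0
  show ?case by (subst ext_zero.simps(2)) (use proj_split[OF fq 0] in blast)
next
  case (Suc i)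
  have P: "is_rep Q P" using Suc.prems by (simp add: projective_rep_def)
  have "ext_zero Q (Suc i) zrep C" using Suc.IH[OF zrep_proj] .
  then show ?case unfolding ext_zero.simps(3)
    by (intro exI[of _ zrep] exI[of _ P] exI[of _ "\<lambda>v. 0\<^sub>m (fst P v) 0"] exI[of _ "\<lambda>v. 1\<^sub>m (fst P v)"]
      conjI Suc.prems ses_zrep_proj[OF P])
qed

definition inj_split :: "('v,'a) quiver \<Rightarrow> ('v,'a,'k::field) rep \<Rightarrow> bool" where
  "inj_split Q Y \<longleftrightarrow> (\<forall>E Z f g. ses Q Y E Z f g \<longrightarrow> ses_splits Q Y E f)"

lemma ext_zero_transfer:
  assumes Y: "inj_split Q Y"
  shows "ext_zero Q (Suc i) C Y0 \<Longrightarrow> ext_zero Q (Suc i) C Y"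
proof (induction i arbitrary: C)
  case 0
  show ?case unfolding ext_zero.simps(2) using Y unfolding inj_split_def by blast
next
  case (Suc i)
  from Suc.prems obtain K P f g where "projective_rep Q P" "ses Q K P C f g" "ext_zero Q (Suc i) K Y0"
    unfolding ext_zero.simps(3) by blast
  then show ?case unfolding ext_zero.simps(3) using Suc.IH by blast
qed




definition lmat :: "('l \<Rightarrow> 'l \<Rightarrow> bool) \<Rightarrow> 'l list \<Rightarrow> 'l list \<Rightarrow> 'k::field mat" where
  "lmat R Lr Lc = mat (length Lr) (length Lc) (\<lambda>(i,j). if R (Lr!i) (Lc!j) then 1 else 0)"

lemma lmat_carrier[simp]: "lmat R Lr Lc \<in> carrier_mat (length Lr) (length Lc)"
  and lmat_dim[simp]: "dim_row (lmat R Lr Lc) = length Lr" "dim_col (lmat R Lr Lc) = length Lc"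
  by (auto simp: lmat_def)

lemma lmat_index[simp]: "i < length Lr \<Longrightarrow> j < length Lc \<Longrightarrow>
  lmat R Lr Lc $$ (i,j) = (if R (Lr!i) (Lc!j) then 1 else 0)"
  by (simp add: lmat_def)

lemma sum_if_unique:
  fixes n :: nat
  assumes "k0 < n" and "\<And>k. k < n \<Longrightarrow> P k \<longleftrightarrow> k = k0"
  shows "(\<Sum>k<n. if P k then F k else 0) = F k0"
proof -
  have "(\<Sum>k<n. if P k then F k else 0) = (\<Sum>k\<in>{k0}. if P k then F k else 0)"
    by (rule sum.mono_neutral_right) (use assms in auto)
  then show ?thesis using assms by simp
qed

lemma sum_if_none:
  fixes n :: nat
  assumes "\<And>k. k < n \<Longrightarrow> \<not> P k"
  shows "(\<Sum>k<n. if P k then F k else 0) = 0"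
  using assms by (intro sum.neutral) auto

lemma lmat_mult_vec_index:
  assumes q: "q \<in> carrier_vec (length Lc)" and i: "i < length Lr"
  shows "(lmat R Lr Lc *\<^sub>v q) $ i = (\<Sum>j<length Lc. if R (Lr!i) (Lc!j) then q$j else (0::'k::field))"
proof -
  have "(lmat R Lr Lc *\<^sub>v q) $ i = row (lmat R Lr Lc) i \<bullet> q" using i by simp
  also have "\<dots> = (\<Sum>j<length Lc. (if R (Lr!i) (Lc!j) then 1 else 0) * q$j)"
    using q i by (simp add: scalar_prod_def lessThan_atLeast0)
  also have "\<dots> = (\<Sum>j<length Lc. if R (Lr!i) (Lc!j) then q$j else 0)"
    by (rule sum.cong) auto
  finally show ?thesis .
qed

lemma lmat_mult_zero:
  assumes "\<And>a b c. R a b \<Longrightarrow> S b c \<Longrightarrow> False"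
  shows "lmat R L1 L2 * lmat S L2 L3 = (0\<^sub>m (length L1) (length L3) :: 'k::field mat)"
proof (rule eq_matI)
  fix i j assume i: "i < dim_row (0\<^sub>m (length L1) (length L3) :: 'k mat)"
    and j: "j < dim_col (0\<^sub>m (length L1) (length L3) :: 'k mat)"
  have "(lmat R L1 L2 * lmat S L2 L3 :: 'k mat) $$ (i,j) = row (lmat R L1 L2) i \<bullet> col (lmat S L2 L3) j"
    using i j by simp
  also have "\<dots> = (\<Sum>k<length L2. (if R (L1!i) (L2!k) then 1 else 0) * (if S (L2!k) (L3!j) then 1 else 0))"
    using i j by (simp add: scalar_prod_def lessThan_atLeast0)
  also have "\<dots> = 0" using assms by (intro sum.neutral) auto
  finally show "(lmat R L1 L2 * lmat S L2 L3 :: 'k mat) $$ (i,j) = (0\<^sub>m (length L1) (length L3) :: 'k mat) $$ (i,j)"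
    using i j by simp
qed auto

definition ind :: "'l list \<Rightarrow> 'l \<Rightarrow> 'k::field vec" where
  "ind L t = vec (length L) (\<lambda>i. if L!i = t then 1 else 0)"

lemma ind_carrier[simp]: "ind L t \<in> carrier_vec (length L)" and ind_dim[simp]: "dim_vec (ind L t) = length L"
  by (auto simp: ind_def)

lemma ind_index[simp]: "i < length L \<Longrightarrow> ind L t $ i = (if L!i = t then 1 else 0)"
  by (simp add: ind_def)

lemma lmat_mult_ind:
  assumes d: "distinct Lc" and t: "t \<in> set Lc"
  shows "lmat R Lr Lc *\<^sub>v ind Lc t = (vec (length Lr) (\<lambda>i. if R (Lr!i) t then 1 else 0) :: 'k::field vec)"
proof (rule eq_vecI)
  obtain k0 where k0: "k0 < length Lc" "Lc ! k0 = t" using t by (auto simp: in_set_conv_nth)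
  have uniq: "Lc ! k = t \<longleftrightarrow> k = k0" if "k < length Lc" for k
    using d k0 that nth_eq_iff_index_eq by metis
  fix i assume i: "i < dim_vec (vec (length Lr) (\<lambda>i. if R (Lr!i) t then 1 else 0) :: 'k vec)"
  then have i: "i < length Lr" by simp
  have "(lmat R Lr Lc *\<^sub>v ind Lc t) $ i = (\<Sum>j<length Lc. if R (Lr!i) (Lc!j) then ind Lc t $ j else (0::'k))"
    by (rule lmat_mult_vec_index[OF ind_carrier i])
  also have "\<dots> = (\<Sum>j<length Lc. if Lc ! j = t then (if R (Lr!i) t then 1 else 0) else (0::'k))"
    by (rule sum.cong) auto
  also have "\<dots> = (if R (Lr!i) t then 1 else 0)" by (rule sum_if_unique[OF k0(1) uniq])
  finally show "(lmat R Lr Lc *\<^sub>v ind Lc t) $ i = vec (length Lr) (\<lambda>i. if R (Lr!i) t then 1 else (0::'k)) $ i"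
    using i by simp
qed simp

lemma ind_nth_unit:
  assumes d: "distinct L" and j: "j < length L"
  shows "ind L (L!j) = (unit_vec (length L) j :: 'k::field vec)"
  by (rule eq_vecI) (use d j nth_eq_iff_index_eq in \<open>auto simp: unit_vec_def\<close>)

lemma mult_unit_col:
  assumes A: "A \<in> carrier_mat m n" and j: "j < n"
  shows "A *\<^sub>v unit_vec n j = col (A :: 'k::field mat) j"
proof (rule eq_vecI)
  fix i assume "i < dim_vec (col A j)"
  then have i: "i < m" using A by simp
  then show "(A *\<^sub>v unit_vec n j) $ i = col A j $ i" using A j by simp
qed (use A in simp)

lemma col_lmat: "j < length Lc \<Longrightarrow>
  col (lmat R Lr Lc) j = (vec (length Lr) (\<lambda>i. if R (Lr!i) (Lc!j) then 1 else 0) :: 'k::field vec)"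
  by (rule eq_vecI) auto

lemma ind_as_vec: "ind L t = vec (length L) (\<lambda>i. if L!i = t then 1 else 0)"
  by (simp add: ind_def)

locale qs =
  fixes Q :: "('v,'a) quiver" and al :: "'a list"
  assumes fq: "finite_quiver Q" and set_al: "set al = arrs Q" and dist_al: "distinct al"
begin

definition labP :: "'v \<Rightarrow> 'v \<Rightarrow> 'a option list" where
  "labP y w = (if w = y then [None] else []) @ map Some (filter (\<lambda>b. src Q b = y \<and> tgt Q b = w) al)"

definition labI :: "'v \<Rightarrow> 'v \<Rightarrow> 'a option list" where
  "labI x u = map Some (filter (\<lambda>a. src Q a = u \<and> tgt Q a = x) al) @ (if u = x then [None] else [])"

lemma distinct_labP: "distinct (labP y w)"
  using dist_al by (auto simp: labP_def distinct_map)

lemma distinct_labI: "distinct (labI x u)"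
  using dist_al by (auto simp: labI_def distinct_map)

lemma set_labP: "set (labP y w) = (if w = y then {None} else {}) \<union> Some ` {c \<in> arrs Q. src Q c = y \<and> tgt Q c = w}"
  using set_al by (auto simp: labP_def)

lemma set_labI: "set (labI x u) = Some ` {c \<in> arrs Q. src Q c = u \<and> tgt Q c = x} \<union> (if u = x then {None} else {})"
  using set_al by (auto simp: labI_def)

lemma labP_None_iff: "j < length (labP y w) \<Longrightarrow> labP y w ! j = None \<longleftrightarrow> w = y \<and> j = 0"
  by (cases j) (auto simp: labP_def nth_append)

lemma labP_Some: "j < length (labP y w) \<Longrightarrow> labP y w ! j = Some c \<Longrightarrow> c \<in> arrs Q \<and> src Q c = y \<and> tgt Q c = w"
proof -
  assume "j < length (labP y w)" "labP y w ! j = Some c"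
  then have "Some c \<in> set (labP y w)" by (metis nth_mem)
  then show ?thesis by (auto simp: set_labP split: if_splits)
qed

lemma labI_Some: "j < length (labI x u) \<Longrightarrow> labI x u ! j = Some c \<Longrightarrow> c \<in> arrs Q \<and> src Q c = u \<and> tgt Q c = x"
proof -
  assume "j < length (labI x u)" "labI x u ! j = Some c"
  then have "Some c \<in> set (labI x u)" by (metis nth_mem)
  then show ?thesis by (auto simp: set_labI split: if_splits)
qed

lemma labI_None: "j < length (labI x u) \<Longrightarrow> labI x u ! j = None \<Longrightarrow> u = x"
proof -
  assume "j < length (labI x u)" "labI x u ! j = None"
  then have "None \<in> set (labI x u)" by (metis nth_mem)
  then show ?thesis by (auto simp: set_labI split: if_splits)
qed

lemma labP_empty: "y \<in> verts Q \<Longrightarrow> w \<notin> verts Q \<Longrightarrow> labP y w = []"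
proof -
  assume "y \<in> verts Q" "w \<notin> verts Q"
  then have "set (labP y w) = {}" using fq by (auto simp: set_labP finite_quiver_def)
  then show ?thesis by simp
qed

lemma labI_empty: "x \<in> verts Q \<Longrightarrow> u \<notin> verts Q \<Longrightarrow> labI x u = []"
proof -
  assume "x \<in> verts Q" "u \<notin> verts Q"
  then have "set (labI x u) = {}" using fq by (auto simp: set_labI finite_quiver_def)
  then show ?thesis by simp
qed

definition Pm :: "'v \<Rightarrow> 'a \<Rightarrow> 'k::field mat" where
  "Pm y c = lmat (\<lambda>l l'. l' = None \<and> l = Some c) (labP y (tgt Q c)) (labP y (src Q c))"

definition PR :: "'v \<Rightarrow> ('v,'a,'k::field) rep" where
  "PR y = (\<lambda>w. length (labP y w), \<lambda>c. if c \<in> arrs Q then Pm y c else 0\<^sub>m 0 0)"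

definition Imt :: "'v \<Rightarrow> 'a \<Rightarrow> 'k::field mat" where
  "Imt x c = lmat (\<lambda>l l'. l = None \<and> l' = Some c) (labI x (tgt Q c)) (labI x (src Q c))"

definition IR :: "'v \<Rightarrow> ('v,'a,'k::field) rep" where
  "IR x = (\<lambda>u. length (labI x u), \<lambda>c. if c \<in> arrs Q then Imt x c else 0\<^sub>m 0 0)"

lemma Pm_carrier[simp]: "Pm y c \<in> carrier_mat (length (labP y (tgt Q c))) (length (labP y (src Q c)))"
  by (simp add: Pm_def)

lemma Pm_dim[simp]: "dim_row (Pm y c) = length (labP y (tgt Q c))" "dim_col (Pm y c) = length (labP y (src Q c))"
  by (simp_all add: Pm_def)

lemma Imt_dim[simp]: "dim_row (Imt x c) = length (labI x (tgt Q c))" "dim_col (Imt x c) = length (labI x (src Q c))"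
  by (simp_all add: Imt_def)

lemma Imt_carrier[simp]: "Imt x c \<in> carrier_mat (length (labI x (tgt Q c))) (length (labI x (src Q c)))"
  by (simp add: Imt_def)

lemma PR_rep: "y \<in> verts Q \<Longrightarrow> is_rep Q (PR y :: ('v,'a,'k::field) rep)"
  unfolding is_rep_def
proof (intro conjI allI ballI impI)
  fix a b assume a: "a \<in> arrs Q" and b: "b \<in> arrs Q" and ab: "src Q b = tgt Q a"
  have "(Pm y b :: 'k mat) * Pm y a = 0\<^sub>m (length (labP y (tgt Q b))) (length (labP y (src Q a)))"
    unfolding Pm_def ab by (rule lmat_mult_zero) auto
  then show "snd (PR y :: ('v,'a,'k) rep) b * snd (PR y :: ('v,'a,'k) rep) a = (0\<^sub>m (fst (PR y :: ('v,'a,'k) rep) (tgt Q b)) (fst (PR y :: ('v,'a,'k) rep) (src Q a)))"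
    using a b by (simp add: PR_def)
qed (auto simp: PR_def labP_empty)

lemma IR_rep: "x \<in> verts Q \<Longrightarrow> is_rep Q (IR x :: ('v,'a,'k::field) rep)"
  unfolding is_rep_def
proof (intro conjI allI ballI impI)
  fix a b assume a: "a \<in> arrs Q" and b: "b \<in> arrs Q" and ab: "src Q b = tgt Q a"
  have "(Imt x b :: 'k mat) * Imt x a = 0\<^sub>m (length (labI x (tgt Q b))) (length (labI x (src Q a)))"
    unfolding Imt_def ab by (rule lmat_mult_zero) auto
  then show "snd (IR x :: ('v,'a,'k) rep) b * snd (IR x :: ('v,'a,'k) rep) a = (0\<^sub>m (fst (IR x :: ('v,'a,'k) rep) (tgt Q b)) (fst (IR x :: ('v,'a,'k) rep) (src Q a)))"
    using a b by (simp add: IR_def)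
qed (auto simp: IR_def labI_empty)


lemma PR_proj:
  assumes y: "y \<in> verts Q"
  shows "projective_rep Q (PR y :: ('v,'a,'k::field) rep)"
  unfolding projective_rep_def
proof (intro conjI allI impI)
  show "is_rep Q (PR y :: ('v,'a,'k) rep)" by (rule PR_rep[OF y])
  fix E Z :: "('v,'a,'k) rep" and g h
  assume asm: "is_rep Q E \<and> is_rep Q Z \<and> rep_hom Q E Z g \<and> hom_surj Q E Z g \<and> rep_hom Q (PR y) Z h"
  then have rE: "is_rep Q E" and rZ: "is_rep Q Z" and hg: "rep_hom Q E Z g" and gs: "hom_surj Q E Z g"
    and hh: "rep_hom Q (PR y) Z h" by auto
  have n0: "0 < length (labP y y)" "labP y y ! 0 = None" by (auto simp: labP_def)
  have hy: "h y \<in> carrier_mat (fst Z y) (length (labP y y))" using hh y by (simp add: rep_hom_def PR_def)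
  have z0: "col (h y) 0 \<in> carrier_vec (fst Z y)" by (rule carrier_vecI) (use hy in simp)
  obtain e where e: "e \<in> carrier_vec (fst E y)" and ge: "g y *\<^sub>v e = col (h y) 0"
    using gs y z0 unfolding hom_surj_def by blast
  define cv where "cv lab = (case lab of None \<Rightarrow> e | Some c \<Rightarrow> snd E c *\<^sub>v e)" for lab
  define l where "l w = mat_of_cols (fst E w) (map cv (labP y w))" for w
  have Ec: "\<And>c. c \<in> arrs Q \<Longrightarrow> snd E c \<in> carrier_mat (fst E (tgt Q c)) (fst E (src Q c))"
    using rE by (simp add: is_rep_def)
  have Zc: "\<And>c. c \<in> arrs Q \<Longrightarrow> snd Z c \<in> carrier_mat (fst Z (tgt Q c)) (fst Z (src Q c))"
    using rZ by (simp add: is_rep_def)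
  have cv_c: "cv (labP y w ! j) \<in> carrier_vec (fst E w)" if j: "j < length (labP y w)" for w j
  proof (cases "labP y w ! j")
    case None
    then have "w = y" using labP_None_iff[OF j] by simp
    then show ?thesis using None e by (simp add: cv_def)
  next
    case (Some c)
    then have c: "c \<in> arrs Q" "src Q c = y" "tgt Q c = w" using labP_Some[OF j] by auto
    then show ?thesis using Some Ec[OF c(1)] e by (auto simp: cv_def)
  qed
  have lc: "l w \<in> carrier_mat (fst E w) (length (labP y w))" for w
    unfolding l_def using mat_of_cols_carrier(1)[of "fst E w" "map cv (labP y w)"] by simp
  have col_l: "col (l w) j = cv (labP y w ! j)" if j: "j < length (labP y w)" for w j
    unfolding l_def using j cv_c[OF j] by simp
  have col_P: "col (Pm y c) j = (vec (length (labP y (tgt Q c)))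
      (\<lambda>i. if labP y (src Q c) ! j = None \<and> labP y (tgt Q c) ! i = Some c then 1 else 0) :: 'k vec)"
    if j: "j < length (labP y (src Q c))" for c j
    unfolding Pm_def using j by (subst col_lmat) (auto intro!: eq_vecI)
  have col_P0: "col (Pm y c) 0 = (ind (labP y (tgt Q c)) (Some c) :: 'k vec)" if c: "src Q c = y" for c
  proof -
    have "0 < length (labP y (src Q c))" "labP y (src Q c) ! 0 = None" using c n0 by auto
    then show ?thesis using col_P[of 0 c] by (auto simp: ind_as_vec intro!: eq_vecI)
  qed
  have lhom: "rep_hom Q (PR y) E l"
    unfolding rep_hom_def
  proof (intro conjI ballI)
    fix w assume "w \<in> verts Q" then show "l w \<in> carrier_mat (fst E w) (fst (PR y :: ('v,'a,'k) rep) w)"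
      using lc by (simp add: PR_def)
  next
    fix c assume c: "c \<in> arrs Q"
    have "l (tgt Q c) * Pm y c = snd E c * l (src Q c)"
    proof (rule mat_col_eqI)
      fix j assume "j < dim_col (snd E c * l (src Q c))"
      then have j: "j < length (labP y (src Q c))" using lc[of "src Q c"] by simp
      have Pc: "Pm y c \<in> carrier_mat (length (labP y (tgt Q c))) (length (labP y (src Q c)))" by simp
      have "col (l (tgt Q c) * Pm y c) j = l (tgt Q c) *\<^sub>v col (Pm y c) j"
        by (rule col_mult2[OF lc Pc j])
      also have "\<dots> = snd E c *\<^sub>v col (l (src Q c)) j"
      proof (cases "labP y (src Q c) ! j")
        case None
        then have s: "src Q c = y" "j = 0" using labP_None_iff[OF j] by auto
        have "Some c \<in> set (labP y (tgt Q c))" using c s by (auto simp: set_labP)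
        then obtain k where k: "k < length (labP y (tgt Q c))" "labP y (tgt Q c) ! k = Some c"
          by (auto simp: in_set_conv_nth)
        have "col (Pm y c) j = (ind (labP y (tgt Q c)) (Some c) :: 'k vec)" using col_P0[OF s(1)] s by simp
        also have "\<dots> = unit_vec (length (labP y (tgt Q c))) k"
          using ind_nth_unit[OF distinct_labP k(1)] k by simp
        finally have "l (tgt Q c) *\<^sub>v col (Pm y c) j = col (l (tgt Q c)) k"
          using mult_unit_col[OF lc k(1)] by simp
        also have "\<dots> = snd E c *\<^sub>v e" using col_l[OF k(1)] k by (simp add: cv_def)
        also have "\<dots> = snd E c *\<^sub>v col (l (src Q c)) j" using col_l[OF j] None by (simp add: cv_def)
        finally show ?thesis .
      next
        case (Some c')
        then have c': "c' \<in> arrs Q" "src Q c' = y" "tgt Q c' = src Q c" using labP_Some[OF j] by auto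
        have "col (Pm y c) j = (0\<^sub>v (length (labP y (tgt Q c))) :: 'k vec)"
          using col_P[OF j] Some by (auto intro!: eq_vecI)
        then have "l (tgt Q c) *\<^sub>v col (Pm y c) j = 0\<^sub>v (fst E (tgt Q c))" using lc by simp
        also have "\<dots> = (snd E c * snd E c') *\<^sub>v e"
        proof -
          have "snd E c * snd E c' = 0\<^sub>m (fst E (tgt Q c)) (fst E (src Q c'))"
            using rE c c' by (simp add: is_rep_def)
          then show ?thesis using e c' zero_mat_mult_vec'[of e "fst E y" "fst E (tgt Q c)"] by simp
        qed
        also have "\<dots> = snd E c *\<^sub>v (snd E c' *\<^sub>v e)"
          using Ec[OF c] Ec[OF c'(1)] e c' by (subst assoc_mult_mat_vec) auto
        also have "\<dots> = snd E c *\<^sub>v col (l (src Q c)) j" using col_l[OF j] Some by (simp add: cv_def)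
        finally show ?thesis .
      qed
      also have "\<dots> = col (snd E c * l (src Q c)) j"
        by (rule col_mult2[OF Ec[OF c] lc j, symmetric])
      finally show "col (l (tgt Q c) * Pm y c) j = col (snd E c * l (src Q c)) j" .
    next
      show "dim_row (l (tgt Q c) * Pm y c) = dim_row (snd E c * l (src Q c))"
        "dim_col (l (tgt Q c) * Pm y c) = dim_col (snd E c * l (src Q c))"
        using lc[of "tgt Q c"] lc[of "src Q c"] Ec[OF c] Pm_carrier[of y c] by simp_all
    qed
    then show "l (tgt Q c) * snd (PR y) c = snd E c * l (src Q c)" using c by (simp add: PR_def)
  qed
  have "g w * l w = h w" if w: "w \<in> verts Q" for w
  proof -
    have gw: "g w \<in> carrier_mat (fst Z w) (fst E w)" using hg w by (simp add: rep_hom_def)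
    have hw: "h w \<in> carrier_mat (fst Z w) (length (labP y w))" using hh w by (simp add: rep_hom_def PR_def)
    show ?thesis
  proof (rule mat_col_eqI)
    fix j assume "j < dim_col (h w)"
    then have j: "j < length (labP y w)" using hw by simp
    have "col (g w * l w) j = g w *\<^sub>v cv (labP y w ! j)"
      using col_mult2[OF gw lc j] col_l[OF j] by simp
    also have "\<dots> = col (h w) j"
    proof (cases "labP y w ! j")
      case None
      then have s: "w = y" "j = 0" using labP_None_iff[OF j] by auto
      then show ?thesis using ge None by (simp add: cv_def)
    next
      case (Some c)
      then have c: "c \<in> arrs Q" "src Q c = y" "tgt Q c = w" using labP_Some[OF j] by auto
      have "g w *\<^sub>v cv (labP y w ! j) = g w *\<^sub>v (snd E c *\<^sub>v e)" using Some by (simp add: cv_def)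
      also have "\<dots> = (g (tgt Q c) * snd E c) *\<^sub>v e" using gw Ec[OF c(1)] c e by simp
      also have "g (tgt Q c) * snd E c = snd Z c * g (src Q c)" using hg c(1) by (simp add: rep_hom_def)
      also have "(snd Z c * g (src Q c)) *\<^sub>v e = snd Z c *\<^sub>v col (h y) 0"
      proof -
        have gy: "g y \<in> carrier_mat (fst Z y) (fst E y)" using hg y by (simp add: rep_hom_def)
        have "(snd Z c * g (src Q c)) *\<^sub>v e = snd Z c *\<^sub>v (g y *\<^sub>v e)"
          using assoc_mult_mat_vec[OF Zc[OF c(1)], of "g y" "fst E y" e] gy e c by simp
        then show ?thesis using ge by simp
      qed
      also have "\<dots> = col (snd Z c * h y) 0"
        using col_mult2[OF Zc[OF c(1)], of "h y" "length (labP y y)" 0] hy c n0 by simp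
      also have "snd Z c * h y = h w * Pm y c"
      proof -
        have "h (tgt Q c) * snd (PR y) c = snd Z c * h (src Q c)" using hh c(1) unfolding rep_hom_def by blast
        then show ?thesis using c by (simp add: PR_def)
      qed
      also have "col (h w * Pm y c) 0 = h w *\<^sub>v col (Pm y c) 0"
        using col_mult2[OF hw, of "Pm y c" "length (labP y y)" 0] c n0 Pm_carrier[of y c] by simp
      also have "col (Pm y c) 0 = (ind (labP y w) (labP y w ! j) :: 'k vec)" using col_P0[OF c(2)] c Some by simp
      also have "\<dots> = unit_vec (length (labP y w)) j" by (rule ind_nth_unit[OF distinct_labP j])
      also have "h w *\<^sub>v unit_vec (length (labP y w)) j = col (h w) j" by (rule mult_unit_col[OF hw j])
      finally show ?thesis .
    qed
    finally show "col (g w * l w) j = col (h w) j" .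
  next
    show "dim_row (g w * l w) = dim_row (h w)" "dim_col (g w * l w) = dim_col (h w)"
      using lc[of w] gw hw by simp_all
  qed
  qed
  then show "\<exists>l. rep_hom Q (PR y) E l \<and> (\<forall>v\<in>verts Q. g v * l v = h v)" using lhom by blast
qed


lemma labI_None_iff: "j < length (labI x u) \<Longrightarrow> labI x u ! j = None \<longleftrightarrow> u = x \<and> j = length (labI x x) - 1"
  by (auto simp: labI_def nth_append)

lemma labI_xx: "length (labI x x) - 1 < length (labI x x)" "labI x x ! (length (labI x x) - 1) = None"
  by (auto simp: labI_def nth_append)

lemma IR_inj:
  assumes x: "x \<in> verts Q"
  shows "inj_split Q (IR x :: ('v,'a,'k::field) rep)"
  unfolding inj_split_def
proof (intro allI impI)
  fix E Z :: "('v,'a,'k) rep" and f g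
  assume s: "ses Q (IR x) E Z f g"
  then have rE: "is_rep Q E" and hf: "rep_hom Q (IR x) E f" and fi: "hom_inj Q (IR x) E f"
    unfolding ses_def by auto
  define i0 where "i0 = length (labI x x) - 1"
  have i0: "i0 < length (labI x x)" "labI x x ! i0 = None" using labI_xx by (auto simp: i0_def)
  have fc: "\<And>v. v \<in> verts Q \<Longrightarrow> f v \<in> carrier_mat (fst E v) (length (labI x v))"
    using hf by (simp add: rep_hom_def IR_def)
  have finj: "\<And>v y. v \<in> verts Q \<Longrightarrow> y \<in> carrier_vec (length (labI x v)) \<Longrightarrow> f v *\<^sub>v y = 0\<^sub>v (fst E v) \<Longrightarrow> y = 0\<^sub>v (length (labI x v))"
    using fi by (simp add: hom_inj_def IR_def)
  obtain L where Lc: "L \<in> carrier_mat (length (labI x x)) (fst E x)" and Lf: "L * f x = 1\<^sub>m (length (labI x x))"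
    using left_inverse_exists[OF fc[OF x] finj[OF x]] by blast
  have Ec: "\<And>c. c \<in> arrs Q \<Longrightarrow> snd E c \<in> carrier_mat (fst E (tgt Q c)) (fst E (src Q c))"
    using rE by (simp add: is_rep_def)
  define rv where "rv lab = (case lab of None \<Rightarrow> row L i0 | Some a \<Rightarrow> row (L * snd E a) i0)" for lab
  define r where "r u = mat_of_rows (fst E u) (map rv (labI x u))" for u
  have rv_c: "rv (labI x u ! i) \<in> carrier_vec (fst E u)" if i: "i < length (labI x u)" for u i
  proof (cases "labI x u ! i")
    case None
    then have "u = x" using labI_None_iff[OF i] by simp
    then show ?thesis using None Lc i0 by (simp add: rv_def)
  next
    case (Some a)
    then have a: "a \<in> arrs Q" "src Q a = u" "tgt Q a = x" using labI_Some[OF i] by auto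
    then show ?thesis using Some Lc Ec[OF a(1)] i0 by (simp add: rv_def)
  qed
  have rc: "r u \<in> carrier_mat (length (labI x u)) (fst E u)" for u
    unfolding r_def using mat_of_rows_carrier(1)[of "fst E u" "map rv (labI x u)"] by simp
  have row_r: "row (r u) i = rv (labI x u ! i)" if i: "i < length (labI x u)" for u i
    unfolding r_def using i rv_c[OF i] by simp
  have r_entry: "r u $$ (i,j) = rv (labI x u ! i) $ j" if i: "i < length (labI x u)" and j: "j < fst E u" for u i j
    using row_r[OF i] rc[of u] i j by (metis carrier_matD(1) carrier_matD(2) index_row(1))
  have rv_None: "rv None \<bullet> w = (L *\<^sub>v w) $ i0" if "w \<in> carrier_vec (fst E x)" for w
    using that Lc i0 by (simp add: rv_def)
  have hom: "rep_hom Q E (IR x) r"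
    unfolding rep_hom_def
  proof (intro conjI ballI)
    fix v assume "v \<in> verts Q" then show "r v \<in> carrier_mat (fst (IR x :: ('v,'a,'k) rep) v) (fst E v)"
      using rc by (simp add: IR_def)
  next
    fix c assume c: "c \<in> arrs Q"
    have s0: "src Q c \<in> verts Q" and t0: "tgt Q c \<in> verts Q" using fq c by (auto simp: finite_quiver_def)
    have "r (tgt Q c) * snd E c = Imt x c * r (src Q c)"
    proof (rule eq_matI)
      fix i j assume i': "i < dim_row (Imt x c * r (src Q c))" and j': "j < dim_col (Imt x c * r (src Q c))"
      then have i: "i < length (labI x (tgt Q c))" and j: "j < fst E (src Q c)" using rc[of "src Q c"] by auto
      have lhs: "(r (tgt Q c) * snd E c) $$ (i,j) = rv (labI x (tgt Q c) ! i) \<bullet> col (snd E c) j"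
        using i j rc[of "tgt Q c"] Ec[OF c] row_r[OF i] by simp
      have rhs: "(Imt x c * r (src Q c)) $$ (i,j) =
          (\<Sum>k<length (labI x (src Q c)). if labI x (tgt Q c) ! i = None \<and> labI x (src Q c) ! k = Some c
              then r (src Q c) $$ (k,j) else 0)"
      proof -
        have "(Imt x c * r (src Q c)) $$ (i,j) = row (Imt x c) i \<bullet> col (r (src Q c)) j"
          using i j rc[of "src Q c"] by simp
        also have "\<dots> = (\<Sum>k<length (labI x (src Q c)). (if labI x (tgt Q c) ! i = None \<and> labI x (src Q c) ! k = Some c then 1 else 0) * r (src Q c) $$ (k,j))"
          using i j rc[of "src Q c"] by (simp add: scalar_prod_def lessThan_atLeast0 Imt_def)
        also have "\<dots> = (\<Sum>k<length (labI x (src Q c)). if labI x (tgt Q c) ! i = None \<and> labI x (src Q c) ! k = Some c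
              then r (src Q c) $$ (k,j) else 0)"
          by (rule sum.cong) auto
        finally show ?thesis .
      qed
      show "(r (tgt Q c) * snd E c) $$ (i,j) = (Imt x c * r (src Q c)) $$ (i,j)"
      proof (cases "labI x (tgt Q c) ! i")
        case None
        then have tx: "tgt Q c = x" using labI_None_iff[OF i] by simp
        have "Some c \<in> set (labI x (src Q c))" using c tx by (auto simp: set_labI)
        then obtain k where k: "k < length (labI x (src Q c))" "labI x (src Q c) ! k = Some c"
          by (auto simp: in_set_conv_nth)
        have uniq: "labI x (src Q c) ! k' = Some c \<longleftrightarrow> k' = k" if "k' < length (labI x (src Q c))" for k'
          using distinct_labI k that nth_eq_iff_index_eq by metis
        have "(Imt x c * r (src Q c)) $$ (i,j) = r (src Q c) $$ (k,j)"
          unfolding rhs using None by (simp add: sum_if_unique[OF k(1) uniq])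
        also have "\<dots> = row (L * snd E c) i0 $ j" using r_entry[OF k(1) j] k by (simp add: rv_def)
        also have "\<dots> = row L i0 \<bullet> col (snd E c) j"
          using Lc Ec[OF c] i0 j tx by simp
        also have "\<dots> = (r (tgt Q c) * snd E c) $$ (i,j)" using lhs None by (simp add: rv_def)
        finally show ?thesis by simp
      next
        case (Some a)
        then have a: "a \<in> arrs Q" "src Q a = tgt Q c" "tgt Q a = x" using labI_Some[OF i] by auto
        have EE: "snd E a * snd E c = 0\<^sub>m (fst E (tgt Q a)) (fst E (src Q c))"
          using rE a c by (simp add: is_rep_def)
        have "(r (tgt Q c) * snd E c) $$ (i,j) = row (L * snd E a) i0 \<bullet> col (snd E c) j"
          using lhs Some by (simp add: rv_def)
        also have "\<dots> = ((L * snd E a) * snd E c) $$ (i0, j)"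
          by (rule index_mult_mat(1)[symmetric]) (use Lc Ec[OF c] i0 j in simp_all)
        also have "(L * snd E a) * snd E c = L * (snd E a * snd E c)"
          using Lc Ec[OF a(1)] Ec[OF c] a by (intro assoc_mult_mat) auto
        also have "\<dots> = 0\<^sub>m (length (labI x x)) (fst E (src Q c))" using EE Lc a by simp
        also have "\<dots> $$ (i0, j) = 0" using i0 j by simp
        also have "0 = (Imt x c * r (src Q c)) $$ (i,j)" unfolding rhs using Some by simp
        finally show ?thesis .
      qed
    qed (use rc[of "tgt Q c"] rc[of "src Q c"] Ec[OF c] in simp_all)
    then show "r (tgt Q c) * snd E c = snd (IR x) c * r (src Q c)" using c by (simp add: IR_def)
  qed
  have "r u * f u = 1\<^sub>m (fst (IR x :: ('v,'a,'k) rep) u)" if u: "u \<in> verts Q" for u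
  proof (rule eq_matI)
    fix i j assume i': "i < dim_row (1\<^sub>m (fst (IR x :: ('v,'a,'k) rep) u) :: 'k mat)"
      and j': "j < dim_col (1\<^sub>m (fst (IR x :: ('v,'a,'k) rep) u) :: 'k mat)"
    then have i: "i < length (labI x u)" and j: "j < length (labI x u)" by (auto simp: IR_def)
    have "(r u * f u) $$ (i,j) = rv (labI x u ! i) \<bullet> col (f u) j"
      using i j rc[of u] fc[OF u] row_r[OF i] by simp
    also have "\<dots> = (if i = j then 1 else 0)"
    proof (cases "labI x u ! i")
      case None
      then have ux: "u = x" "i = i0" using labI_None_iff[OF i] by (auto simp: i0_def)
      have "rv (labI x u ! i) \<bullet> col (f u) j = (L * f x) $$ (i0, j)"
        using None ux Lc fc[OF x] i0 j by (simp add: rv_def)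
      also have "\<dots> = (if i = j then 1 else 0)" using Lf ux i0 j by simp
      finally show ?thesis .
    next
      case (Some a)
      then have a: "a \<in> arrs Q" "src Q a = u" "tgt Q a = x" using labI_Some[OF i] by auto
      have fE: "f (tgt Q a) * Imt x a = snd E a * f (src Q a)"
        using hf a(1) by (simp add: rep_hom_def IR_def)
      have "rv (labI x u ! i) \<bullet> col (f u) j = ((L * snd E a) * f u) $$ (i0, j)"
        unfolding Some rv_def option.case
        by (rule index_mult_mat(1)[symmetric]) (use Lc fc[OF u] i0 j in simp_all)
      also have "(L * snd E a) * f u = L * (snd E a * f u)"
        using Lc Ec[OF a(1)] fc[OF u] a by (intro assoc_mult_mat) auto
      also have "snd E a * f u = f x * Imt x a" using fE a by simp
      also have "L * (f x * Imt x a) = (L * f x) * Imt x a"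
        using Lc fc[OF x] Imt_carrier[of x a] a by (intro assoc_mult_mat[symmetric]) auto
      also have "\<dots> = Imt x a" using Lf Imt_carrier[of x a] a by simp
      also have "Imt x a $$ (i0, j) = (if labI x u ! j = Some a then 1 else 0)"
        using i0 j a by (simp add: Imt_def)
      also have "\<dots> = (if i = j then 1 else 0)"
        using Some distinct_labI[of x u] i j nth_eq_iff_index_eq by metis
      finally show ?thesis .
    qed
    also have "\<dots> = (1\<^sub>m (fst (IR x :: ('v,'a,'k) rep) u) :: 'k mat) $$ (i,j)" using i j by (simp add: IR_def)
    finally show "(r u * f u) $$ (i,j) = (1\<^sub>m (fst (IR x :: ('v,'a,'k) rep) u) :: 'k mat) $$ (i,j)" .
  qed (use rc[of u] fc[OF u] in \<open>simp_all add: IR_def\<close>)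
  then show "ses_splits Q (IR x) E f" unfolding ses_splits_def using hom by blast
qed

end




lemma upper_fb_zero:
  fixes A1 :: "'k::field mat"
  assumes c: "A1 \<in> carrier_mat nr1 n1" "B1 \<in> carrier_mat nr1 n2" "D1 \<in> carrier_mat nr2 n2"
    "A2 \<in> carrier_mat n1 nc1" "B2 \<in> carrier_mat n1 nc2" "D2 \<in> carrier_mat n2 nc2"
    and z: "A1 * A2 = 0\<^sub>m nr1 nc1" "A1 * B2 = 0\<^sub>m nr1 nc2" "B1 * D2 = 0\<^sub>m nr1 nc2" "D1 * D2 = 0\<^sub>m nr2 nc2"
  shows "four_block_mat A1 B1 (0\<^sub>m nr2 n1) D1 * four_block_mat A2 B2 (0\<^sub>m n2 nc1) D2 = 0\<^sub>m (nr1+nr2) (nc1+nc2)"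
proof -
  have "four_block_mat A1 B1 (0\<^sub>m nr2 n1) D1 * four_block_mat A2 B2 (0\<^sub>m n2 nc1) D2 =
    four_block_mat (A1 * A2 + B1 * 0\<^sub>m n2 nc1) (A1 * B2 + B1 * D2)
    (0\<^sub>m nr2 n1 * A2 + D1 * 0\<^sub>m n2 nc1) (0\<^sub>m nr2 n1 * B2 + D1 * D2)"
    by (rule mult_four_block_mat) (use c in auto)
  also have "A1 * A2 + B1 * 0\<^sub>m n2 nc1 = 0\<^sub>m nr1 nc1" using z c by simp
  also have "A1 * B2 + B1 * D2 = 0\<^sub>m nr1 nc2" using z c by simp
  also have "0\<^sub>m nr2 n1 * A2 + D1 * 0\<^sub>m n2 nc1 = 0\<^sub>m nr2 nc1" using c by simp
  also have "0\<^sub>m nr2 n1 * B2 + D1 * D2 = 0\<^sub>m nr2 nc2" using z c by simp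
  finally show ?thesis by simp
qed

lemma fb_mult_vec:
  fixes A :: "'k::field mat"
  assumes A: "A \<in> carrier_mat nr1 nc1" and B: "B \<in> carrier_mat nr1 nc2" and D: "D \<in> carrier_mat nr2 nc2"
    and a: "a \<in> carrier_vec nc1" and d: "d \<in> carrier_vec nc2"
  shows "four_block_mat A B (0\<^sub>m nr2 nc1) D *\<^sub>v (a @\<^sub>v d) = (A *\<^sub>v a + B *\<^sub>v d) @\<^sub>v (D *\<^sub>v d)"
proof -
  have "four_block_mat A B (0\<^sub>m nr2 nc1) D *\<^sub>v (a @\<^sub>v d) = (A *\<^sub>v a + B *\<^sub>v d) @\<^sub>v (0\<^sub>m nr2 nc1 *\<^sub>v a + D *\<^sub>v d)"
    by (rule four_block_mat_mult_vec[OF A B _ D a d]) simp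
  also have "0\<^sub>m nr2 nc1 *\<^sub>v a = 0\<^sub>v nr2" by (rule zero_mat_mult_vec'[OF a])
  also have "0\<^sub>v nr2 + D *\<^sub>v d = D *\<^sub>v d" using D d by simp
  finally show ?thesis .
qed

lemma zero_append: "(0\<^sub>v (n+m) :: 'k::field vec) = 0\<^sub>v n @\<^sub>v 0\<^sub>v m"
  by (rule eq_vecI) auto

locale qext = qs Q al for Q :: "('v,'a) quiver" and al +
  fixes y x :: 'v and c0 \<beta> \<gamma> :: 'a
  assumes yv: "y \<in> verts Q" and xv: "x \<in> verts Q"
begin

abbreviation "dP w \<equiv> length (labP y w)"
abbreviation "dI w \<equiv> length (labI x w)"

definition Th :: "'a \<Rightarrow> 'k::field mat" where
  "Th c = lmat (\<lambda>l l'. c = c0 \<and> l' = Some \<beta> \<and> l = Some \<gamma>) (labP y (tgt Q c)) (labI x (src Q c))"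

definition Em :: "'a \<Rightarrow> 'k::field mat" where
  "Em c = four_block_mat (Pm y c) (Th c) (0\<^sub>m (dI (tgt Q c)) (dP (src Q c))) (Imt x c)"

definition ER :: "('v,'a,'k::field) rep" where
  "ER = (\<lambda>w. dP w + dI w, \<lambda>c. if c \<in> arrs Q then Em c else 0\<^sub>m 0 0)"

definition fE :: "'v \<Rightarrow> 'k::field mat" where
  "fE w = mat (dP w + dI w) (dP w) (\<lambda>(i,j). if i = j then 1 else 0)"

definition gE :: "'v \<Rightarrow> 'k::field mat" where
  "gE w = mat (dI w) (dP w + dI w) (\<lambda>(i,j). if j = dP w + i then 1 else 0)"

lemma Th_carrier[simp]: "Th c \<in> carrier_mat (dP (tgt Q c)) (dI (src Q c))"
  by (simp add: Th_def)

lemma Em_carrier[simp]: "(Em c :: 'k::field mat) \<in> carrier_mat (dP (tgt Q c) + dI (tgt Q c)) (dP (src Q c) + dI (src Q c))"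
  unfolding Em_def by (rule four_block_carrier_mat) simp_all

lemma fE_carrier[simp]: "fE w \<in> carrier_mat (dP w + dI w) (dP w)"
  by (simp add: fE_def)

lemma gE_carrier[simp]: "gE w \<in> carrier_mat (dI w) (dP w + dI w)"
  by (simp add: gE_def)

lemma Pm_mv'[simp]: "p \<in> carrier_vec (length (labP y' (src Q c))) \<Longrightarrow> (Pm y' c :: 'k::field mat) *\<^sub>v p \<in> carrier_vec (length (labP y' (tgt Q c)))"
  by (rule mult_mat_vec_carrier[OF Pm_carrier])

lemma Imt_mv[simp]: "p \<in> carrier_vec (length (labI x' (src Q c))) \<Longrightarrow> (Imt x' c :: 'k::field mat) *\<^sub>v p \<in> carrier_vec (length (labI x' (tgt Q c)))"
  by (rule mult_mat_vec_carrier[OF Imt_carrier])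

lemma Th_mv[simp]: "p \<in> carrier_vec (dI (src Q c)) \<Longrightarrow> (Th c :: 'k::field mat) *\<^sub>v p \<in> carrier_vec (dP (tgt Q c))"
  by (rule mult_mat_vec_carrier[OF Th_carrier])

lemma Em_mv[simp]: "p \<in> carrier_vec (dP (src Q c) + dI (src Q c)) \<Longrightarrow> (Em c :: 'k::field mat) *\<^sub>v p \<in> carrier_vec (dP (tgt Q c) + dI (tgt Q c))"
  by (rule mult_mat_vec_carrier[OF Em_carrier])

lemma fE_vec: assumes p: "p \<in> carrier_vec (dP w)" shows "(fE w :: 'k::field mat) *\<^sub>v p = p @\<^sub>v 0\<^sub>v (dI w)"
proof (rule eq_vecI)
  fix i assume "i < dim_vec (p @\<^sub>v 0\<^sub>v (dI w))"
  then have i: "i < dP w + dI w" using p by simp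
  have "(fE w *\<^sub>v p) $ i = (\<Sum>j<dP w. (if i = j then 1 else 0) * p $ j)"
    using i p by (simp add: fE_def scalar_prod_def lessThan_atLeast0)
  also have "\<dots> = (\<Sum>j<dP w. if j = i then p $ j else 0)" by (rule sum.cong) auto
  also have "\<dots> = (p @\<^sub>v 0\<^sub>v (dI w)) $ i"
  proof (cases "i < dP w")
    case True
    then show ?thesis using p by (subst sum_if_unique[of i]) auto
  next
    case False
    then show ?thesis using p i by (subst sum_if_none) auto
  qed
  finally show "(fE w *\<^sub>v p) $ i = (p @\<^sub>v 0\<^sub>v (dI w)) $ i" .
qed (use p in \<open>simp add: fE_def\<close>)

lemma gE_vec: assumes a: "a \<in> carrier_vec (dP w)" and d: "d \<in> carrier_vec (dI w)"
  shows "(gE w :: 'k::field mat) *\<^sub>v (a @\<^sub>v d) = d"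
proof (rule eq_vecI)
  fix i assume "i < dim_vec d"
  then have i: "i < dI w" using d by simp
  have "(gE w *\<^sub>v (a @\<^sub>v d)) $ i = (\<Sum>j<dP w + dI w. (if j = dP w + i then 1 else 0) * (a @\<^sub>v d) $ j)"
    using i a d by (simp add: gE_def scalar_prod_def lessThan_atLeast0)
  also have "\<dots> = (\<Sum>j<dP w + dI w. if j = dP w + i then (a @\<^sub>v d) $ j else 0)" by (rule sum.cong) auto
  also have "\<dots> = (a @\<^sub>v d) $ (dP w + i)" using i by (subst sum_if_unique[of "dP w + i"]) auto
  also have "\<dots> = d $ i" using a d i by simp
  finally show "(gE w *\<^sub>v (a @\<^sub>v d)) $ i = d $ i" .
qed (use d in \<open>simp add: gE_def\<close>)

lemma Em_vec: assumes a: "a \<in> carrier_vec (dP (src Q c))" and d: "d \<in> carrier_vec (dI (src Q c))"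
  shows "(Em c :: 'k::field mat) *\<^sub>v (a @\<^sub>v d) = (Pm y c *\<^sub>v a + Th c *\<^sub>v d) @\<^sub>v (Imt x c *\<^sub>v d)"
  unfolding Em_def by (rule fb_mult_vec[OF Pm_carrier Th_carrier Imt_carrier a d])

lemma ER_rep: "is_rep Q (ER :: ('v,'a,'k::field) rep)"
  unfolding is_rep_def
proof (intro conjI allI ballI impI)
  fix v assume "v \<notin> verts Q"
  then show "fst (ER :: ('v,'a,'k) rep) v = 0" using yv xv by (simp add: ER_def labP_empty labI_empty)
next
  fix a assume "a \<notin> arrs Q" then show "snd (ER :: ('v,'a,'k) rep) a = 0\<^sub>m 0 0" by (simp add: ER_def)
next
  fix a assume "a \<in> arrs Q"
  then show "snd (ER :: ('v,'a,'k) rep) a \<in> carrier_mat (fst (ER :: ('v,'a,'k) rep) (tgt Q a)) (fst (ER :: ('v,'a,'k) rep) (src Q a))"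
    by (simp add: ER_def)
next
  fix a b assume a: "a \<in> arrs Q" and b: "b \<in> arrs Q" and ab: "src Q b = tgt Q a"
  have z1: "(Pm y b :: 'k mat) * Pm y a = 0\<^sub>m (dP (tgt Q b)) (dP (src Q a))"
    unfolding Pm_def ab by (rule lmat_mult_zero) auto
  have z2: "(Pm y b :: 'k mat) * Th a = 0\<^sub>m (dP (tgt Q b)) (dI (src Q a))"
    unfolding Pm_def Th_def ab by (rule lmat_mult_zero) auto
  have z3: "(Th b :: 'k mat) * Imt x a = 0\<^sub>m (dP (tgt Q b)) (dI (src Q a))"
    unfolding Imt_def Th_def ab by (rule lmat_mult_zero) auto
  have z4: "(Imt x b :: 'k mat) * Imt x a = 0\<^sub>m (dI (tgt Q b)) (dI (src Q a))"
    unfolding Imt_def ab by (rule lmat_mult_zero) auto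
  have "(Em b :: 'k mat) * Em a = 0\<^sub>m (dP (tgt Q b) + dI (tgt Q b)) (dP (src Q a) + dI (src Q a))"
  proof -
    have cA2: "(Pm y a :: 'k mat) \<in> carrier_mat (dP (src Q b)) (dP (src Q a))" using Pm_carrier[of y a] ab by simp
    have cB2: "(Th a :: 'k mat) \<in> carrier_mat (dP (src Q b)) (dI (src Q a))" using Th_carrier[of a] ab by simp
    have cD2: "(Imt x a :: 'k mat) \<in> carrier_mat (dI (src Q b)) (dI (src Q a))" using Imt_carrier[of x a] ab by simp
    show ?thesis unfolding Em_def ab[symmetric]
      by (rule upper_fb_zero[OF Pm_carrier Th_carrier Imt_carrier cA2 cB2 cD2 z1 z2 z3 z4])
  qed
  then show "snd (ER :: ('v,'a,'k) rep) b * snd (ER :: ('v,'a,'k) rep) a =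
    0\<^sub>m (fst (ER :: ('v,'a,'k) rep) (tgt Q b)) (fst (ER :: ('v,'a,'k) rep) (src Q a))"
    using a b by (simp add: ER_def)
qed


lemma split_vec:
  assumes e: "e \<in> carrier_vec (n + m)"
  obtains a d where "a \<in> carrier_vec n" "d \<in> carrier_vec m" "e = a @\<^sub>v d"
  using vec_first_last_append[OF e] vec_first_carrier vec_last_carrier by metis

lemma ER_ses: "ses Q (PR y) (ER :: ('v,'a,'k::field) rep) (IR x) fE gE"
  unfolding ses_def
proof (intro conjI)
  show "is_rep Q (PR y :: ('v,'a,'k) rep)" by (rule PR_rep[OF yv])
  show "is_rep Q (ER :: ('v,'a,'k) rep)" by (rule ER_rep)
  show "is_rep Q (IR x :: ('v,'a,'k) rep)" by (rule IR_rep[OF xv])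
  show "rep_hom Q (PR y) (ER :: ('v,'a,'k) rep) fE"
    unfolding rep_hom_def
  proof (intro conjI ballI)
    fix w assume "w \<in> verts Q"
    show "(fE w :: 'k mat) \<in> carrier_mat (fst (ER :: ('v,'a,'k) rep) w) (fst (PR y :: ('v,'a,'k) rep) w)"
      by (simp add: ER_def PR_def)
  next
    fix c assume c: "c \<in> arrs Q"
    have "(fE (tgt Q c) :: 'k mat) * Pm y c = Em c * fE (src Q c)"
    proof (rule mat_eq_vecI)
      show "(fE (tgt Q c) :: 'k mat) * Pm y c \<in> carrier_mat (dP (tgt Q c) + dI (tgt Q c)) (dP (src Q c))"
        using fE_carrier[of "tgt Q c"] Pm_carrier[of y c] by (rule mult_carrier_mat)
      show "(Em c :: 'k mat) * fE (src Q c) \<in> carrier_mat (dP (tgt Q c) + dI (tgt Q c)) (dP (src Q c))"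
        using Em_carrier[of c] fE_carrier[of "src Q c"] by (rule mult_carrier_mat)
      fix p :: "'k vec" assume p: "p \<in> carrier_vec (dP (src Q c))"
      have Pp: "Pm y c *\<^sub>v p \<in> carrier_vec (dP (tgt Q c))" using p by simp
      have "(fE (tgt Q c) * Pm y c) *\<^sub>v p = fE (tgt Q c) *\<^sub>v (Pm y c *\<^sub>v p)"
        by (rule assoc_mult_mat_vec[OF fE_carrier Pm_carrier p])
      also have "\<dots> = (Pm y c *\<^sub>v p) @\<^sub>v 0\<^sub>v (dI (tgt Q c))" by (rule fE_vec[OF Pp])
      also have "\<dots> = (Pm y c *\<^sub>v p + Th c *\<^sub>v 0\<^sub>v (dI (src Q c))) @\<^sub>v (Imt x c *\<^sub>v 0\<^sub>v (dI (src Q c)))"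
      proof -
        have t0: "Th c *\<^sub>v 0\<^sub>v (dI (src Q c)) = (0\<^sub>v (dP (tgt Q c)) :: 'k vec)"
          by (rule mult_mat_vec_zero_right[OF Th_carrier])
        have i0: "Imt x c *\<^sub>v 0\<^sub>v (dI (src Q c)) = (0\<^sub>v (dI (tgt Q c)) :: 'k vec)"
          by (rule mult_mat_vec_zero_right[OF Imt_carrier])
        show ?thesis unfolding t0 i0 using Pp by simp
      qed
      also have "\<dots> = Em c *\<^sub>v (p @\<^sub>v 0\<^sub>v (dI (src Q c)))" by (rule Em_vec[symmetric, OF p]) simp
      also have "\<dots> = Em c *\<^sub>v (fE (src Q c) *\<^sub>v p)" using fE_vec[OF p] by simp
      also have "\<dots> = (Em c * fE (src Q c)) *\<^sub>v p" by (rule assoc_mult_mat_vec[OF Em_carrier fE_carrier p, symmetric])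
      finally show "(fE (tgt Q c) * Pm y c) *\<^sub>v p = (Em c * fE (src Q c)) *\<^sub>v p" .
    qed
    then show "fE (tgt Q c) * snd (PR y) c = snd (ER :: ('v,'a,'k) rep) c * fE (src Q c)"
      using c by (simp add: PR_def ER_def)
  qed
  show "rep_hom Q (ER :: ('v,'a,'k) rep) (IR x) gE"
    unfolding rep_hom_def
  proof (intro conjI ballI)
    fix w assume "w \<in> verts Q"
    show "(gE w :: 'k mat) \<in> carrier_mat (fst (IR x :: ('v,'a,'k) rep) w) (fst (ER :: ('v,'a,'k) rep) w)"
      by (simp add: ER_def IR_def)
  next
    fix c assume c: "c \<in> arrs Q"
    have "(gE (tgt Q c) :: 'k mat) * Em c = Imt x c * gE (src Q c)"
    proof (rule mat_eq_vecI)
      show "(gE (tgt Q c) :: 'k mat) * Em c \<in> carrier_mat (dI (tgt Q c)) (dP (src Q c) + dI (src Q c))"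
        using gE_carrier[of "tgt Q c"] Em_carrier[of c] by (rule mult_carrier_mat)
      show "(Imt x c :: 'k mat) * gE (src Q c) \<in> carrier_mat (dI (tgt Q c)) (dP (src Q c) + dI (src Q c))"
        using Imt_carrier[of x c] gE_carrier[of "src Q c"] by (rule mult_carrier_mat)
      fix e :: "'k vec" assume e: "e \<in> carrier_vec (dP (src Q c) + dI (src Q c))"
      obtain a d where a: "a \<in> carrier_vec (dP (src Q c))" and d: "d \<in> carrier_vec (dI (src Q c))"
        and ead: "e = a @\<^sub>v d" using split_vec[OF e] by blast
      have Pa: "Pm y c *\<^sub>v a + Th c *\<^sub>v d \<in> carrier_vec (dP (tgt Q c))" using a d by simp
      have Id: "Imt x c *\<^sub>v d \<in> carrier_vec (dI (tgt Q c))" using d by simp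
      have "(gE (tgt Q c) * Em c) *\<^sub>v e = gE (tgt Q c) *\<^sub>v (Em c *\<^sub>v e)"
        by (rule assoc_mult_mat_vec[OF gE_carrier Em_carrier e])
      also have "\<dots> = Imt x c *\<^sub>v d" unfolding ead Em_vec[OF a d] by (rule gE_vec[OF Pa Id])
      also have "\<dots> = Imt x c *\<^sub>v (gE (src Q c) *\<^sub>v e)" unfolding ead gE_vec[OF a d] ..
      also have "\<dots> = (Imt x c * gE (src Q c)) *\<^sub>v e" by (rule assoc_mult_mat_vec[OF Imt_carrier gE_carrier e, symmetric])
      finally show "(gE (tgt Q c) * Em c) *\<^sub>v e = (Imt x c * gE (src Q c)) *\<^sub>v e" .
    qed
    then show "gE (tgt Q c) * snd (ER :: ('v,'a,'k) rep) c = snd (IR x) c * gE (src Q c)"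
      using c by (simp add: IR_def ER_def)
  qed
  show "hom_inj Q (PR y) (ER :: ('v,'a,'k) rep) fE"
    unfolding hom_inj_def
  proof (intro ballI impI)
    fix w and p :: "'k vec" assume p: "p \<in> carrier_vec (fst (PR y :: ('v,'a,'k) rep) w)"
      and "fE w *\<^sub>v p = 0\<^sub>v (fst (ER :: ('v,'a,'k) rep) w)"
    then have p': "p \<in> carrier_vec (dP w)" and "p @\<^sub>v 0\<^sub>v (dI w) = 0\<^sub>v (dP w) @\<^sub>v 0\<^sub>v (dI w)"
      using fE_vec[of p w] zero_append[of "dP w" "dI w"] by (auto simp: PR_def ER_def)
    then show "p = 0\<^sub>v (fst (PR y :: ('v,'a,'k) rep) w)" using append_vec_eq[OF p'] by (simp add: PR_def)
  qed
  show "hom_surj Q (ER :: ('v,'a,'k) rep) (IR x) gE"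
    unfolding hom_surj_def
  proof (intro ballI)
    fix w and d :: "'k vec" assume d: "d \<in> carrier_vec (fst (IR x :: ('v,'a,'k) rep) w)"
    then have d': "d \<in> carrier_vec (dI w)" by (simp add: IR_def)
    show "\<exists>e\<in>carrier_vec (fst (ER :: ('v,'a,'k) rep) w). gE w *\<^sub>v e = d"
      by (rule bexI[of _ "0\<^sub>v (dP w) @\<^sub>v d"]) (use gE_vec[OF _ d'] d' in \<open>auto simp: ER_def\<close>)
  qed
  show "\<forall>w\<in>verts Q. \<forall>e\<in>carrier_vec (fst (ER :: ('v,'a,'k) rep) w).
      (gE w *\<^sub>v (e :: 'k vec) = 0\<^sub>v (fst (IR x :: ('v,'a,'k) rep) w)) = (\<exists>p\<in>carrier_vec (fst (PR y :: ('v,'a,'k) rep) w). fE w *\<^sub>v p = e)"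
  proof (intro ballI)
    fix w and e :: "'k vec" assume e: "e \<in> carrier_vec (fst (ER :: ('v,'a,'k) rep) w)"
    then have e': "e \<in> carrier_vec (dP w + dI w)" by (simp add: ER_def)
    obtain a d where a: "a \<in> carrier_vec (dP w)" and d: "d \<in> carrier_vec (dI w)"
      and ead: "e = a @\<^sub>v d" using split_vec[OF e'] by blast
    have "gE w *\<^sub>v e = d" unfolding ead by (rule gE_vec[OF a d])
    moreover have "(\<exists>p\<in>carrier_vec (dP w). fE w *\<^sub>v p = e) \<longleftrightarrow> d = 0\<^sub>v (dI w)"
    proof
      assume "\<exists>p\<in>carrier_vec (dP w). fE w *\<^sub>v p = e"
      then obtain p where p: "p \<in> carrier_vec (dP w)" and "fE w *\<^sub>v p = e" by blast
      then have "p @\<^sub>v 0\<^sub>v (dI w) = a @\<^sub>v d" using fE_vec[OF p] ead by simp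
      then show "d = 0\<^sub>v (dI w)" using append_vec_eq[OF p a] by simp
    next
      assume "d = 0\<^sub>v (dI w)"
      then show "\<exists>p\<in>carrier_vec (dP w). fE w *\<^sub>v p = e" using fE_vec[OF a] a ead by auto
    qed
    ultimately show "(gE w *\<^sub>v e = 0\<^sub>v (fst (IR x :: ('v,'a,'k) rep) w)) = (\<exists>p\<in>carrier_vec (fst (PR y :: ('v,'a,'k) rep) w). fE w *\<^sub>v p = e)"
      by (simp add: IR_def PR_def)
  qed
qed


lemma Pm_entry:
  assumes q: "q \<in> carrier_vec (dP (src Q c))" and k: "k < dP (tgt Q c)"
  shows "((Pm y c :: 'k::field mat) *\<^sub>v q) $ k = (if labP y (tgt Q c) ! k = Some c \<and> src Q c = y then q $ 0 else 0)"
proof -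
  have "((Pm y c :: 'k mat) *\<^sub>v q) $ k = (\<Sum>j<dP (src Q c). if labP y (src Q c) ! j = None \<and> labP y (tgt Q c) ! k = Some c then q$j else 0)"
    unfolding Pm_def by (rule lmat_mult_vec_index[OF q k])
  also have "\<dots> = (if labP y (tgt Q c) ! k = Some c \<and> src Q c = y then q $ 0 else 0)"
  proof (cases "labP y (tgt Q c) ! k = Some c \<and> src Q c = y")
    case True
    have z: "0 < dP (src Q c)" using True by (simp add: labP_def)
    have "(\<Sum>j<dP (src Q c). if labP y (src Q c) ! j = None \<and> labP y (tgt Q c) ! k = Some c then q$j else 0)
      = (\<Sum>j<dP (src Q c). if labP y (src Q c) ! j = None then q$j else 0)" using True by simp
    also have "\<dots> = q $ 0" by (rule sum_if_unique[OF z]) (use labP_None_iff True in auto)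
    finally show ?thesis using True by simp
  next
    case False
    have "\<not> (labP y (src Q c) ! j = None \<and> labP y (tgt Q c) ! k = Some c)" if "j < dP (src Q c)" for j
      using False labP_None_iff[OF that] by blast
    then have "(\<Sum>j<dP (src Q c). if labP y (src Q c) ! j = None \<and> labP y (tgt Q c) ! k = Some c then q$j else 0) = 0"
      by (intro sum_if_none) auto
    then show ?thesis by (simp only: if_not_P[OF False])
  qed
  finally show ?thesis .
qed

lemma ER_hom_vec:
  assumes r: "rep_hom Q (ER :: ('v,'a,'k::field) rep) (PR y) r" and c: "c \<in> arrs Q"
    and e: "e \<in> carrier_vec (dP (src Q c) + dI (src Q c))"
  shows "r (tgt Q c) *\<^sub>v (Em c *\<^sub>v e) = Pm y c *\<^sub>v (r (src Q c) *\<^sub>v e)"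
proof -
  have s: "src Q c \<in> verts Q" and t: "tgt Q c \<in> verts Q" using fq c by (auto simp: finite_quiver_def)
  have rs: "r (src Q c) \<in> carrier_mat (dP (src Q c)) (dP (src Q c) + dI (src Q c))"
    using r s by (simp add: rep_hom_def ER_def PR_def)
  have rt: "r (tgt Q c) \<in> carrier_mat (dP (tgt Q c)) (dP (tgt Q c) + dI (tgt Q c))"
    using r t by (simp add: rep_hom_def ER_def PR_def)
  have eq: "r (tgt Q c) * Em c = Pm y c * r (src Q c)"
    using r c by (simp add: rep_hom_def ER_def PR_def)
  have "r (tgt Q c) *\<^sub>v (Em c *\<^sub>v e) = (r (tgt Q c) * Em c) *\<^sub>v e"
    by (rule assoc_mult_mat_vec[OF rt Em_carrier e, symmetric])
  also have "\<dots> = (Pm y c * r (src Q c)) *\<^sub>v e" using eq by simp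
  also have "\<dots> = Pm y c *\<^sub>v (r (src Q c) *\<^sub>v e)" by (rule assoc_mult_mat_vec[OF Pm_carrier rs e])
  finally show ?thesis .
qed

lemma r_fE:
  assumes r: "rep_hom Q (ER :: ('v,'a,'k::field) rep) (PR y) r" and rf: "\<forall>v\<in>verts Q. r v * fE v = 1\<^sub>m (fst (PR y :: ('v,'a,'k) rep) v)"
    and w: "w \<in> verts Q" and q: "q \<in> carrier_vec (dP w)"
  shows "r w *\<^sub>v (fE w *\<^sub>v q) = q"
proof -
  have rw: "r w \<in> carrier_mat (dP w) (dP w + dI w)" using r w by (simp add: rep_hom_def ER_def PR_def)
  have "r w *\<^sub>v (fE w *\<^sub>v q) = (r w * fE w) *\<^sub>v q" by (rule assoc_mult_mat_vec[OF rw fE_carrier q, symmetric])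
  also have "r w * fE w = 1\<^sub>m (dP w)" using rf w by (simp add: PR_def)
  finally show ?thesis using q by simp
qed

lemma nonsplit_out:
  assumes b: "b1 \<in> arrs Q" "b2 \<in> arrs Q" "b3 \<in> arrs Q" "src Q b1 = y" "src Q b2 = y" "src Q b3 = y"
    and dist: "b1 \<noteq> b2" "b1 \<noteq> b3" "b2 \<noteq> b3"
    and par: "x = tgt Q b1" "c0 = b2" "\<beta> = b1" "\<gamma> = b2"
  shows "\<not> ses_splits Q (PR y) (ER :: ('v,'a,'k::field) rep) fE"
proof
  assume "ses_splits Q (PR y) (ER :: ('v,'a,'k) rep) fE"
  then obtain r where r: "rep_hom Q (ER :: ('v,'a,'k) rep) (PR y) r"
    and rf: "\<forall>v\<in>verts Q. r v * fE v = 1\<^sub>m (fst (PR y :: ('v,'a,'k) rep) v)"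
    unfolding ses_splits_def by blast
  have sb1: "Some b1 \<in> set (labI x y)" using b par by (auto simp: set_labI)
  define u :: "'k vec" where "u = 0\<^sub>v (dP y) @\<^sub>v ind (labI x y) (Some b1)"
  have uc: "u \<in> carrier_vec (dP y + dI y)" unfolding u_def by (rule append_carrier_vec) auto
  define p where "p = r y *\<^sub>v u"
  have ryc: "r y \<in> carrier_mat (dP y) (dP y + dI y)" using r yv by (simp add: rep_hom_def ER_def PR_def)
  have pc: "p \<in> carrier_vec (dP y)" unfolding p_def using ryc uc by simp
  have Emu: "Em c *\<^sub>v u = (Th c *\<^sub>v ind (labI x y) (Some b1)) @\<^sub>v (Imt x c *\<^sub>v ind (labI x y) (Some b1))"
    if c: "c \<in> arrs Q" "src Q c = y" for c
  proof -
    have "Em c *\<^sub>v u = (Pm y c *\<^sub>v 0\<^sub>v (dP y) + Th c *\<^sub>v ind (labI x y) (Some b1)) @\<^sub>v (Imt x c *\<^sub>v ind (labI x y) (Some b1))"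
      unfolding u_def using Em_vec[of "0\<^sub>v (dP y)" c "ind (labI x y) (Some b1)"] c by simp
    also have "Pm y c *\<^sub>v 0\<^sub>v (dP y) = (0\<^sub>v (dP (tgt Q c)) :: 'k vec)"
      using mult_mat_vec_zero_right[OF Pm_carrier[of y c]] c by simp
    also have "0\<^sub>v (dP (tgt Q c)) + Th c *\<^sub>v ind (labI x y) (Some b1) = (Th c *\<^sub>v ind (labI x y) (Some b1) :: 'k vec)"
      using Th_mv[of "ind (labI x y) (Some b1)" c] c by simp
    finally show ?thesis .
  qed
  have Th_ind: "(Th c :: 'k mat) *\<^sub>v ind (labI x y) (Some b1) = vec (dP (tgt Q c)) (\<lambda>i. if c = b2 \<and> labP y (tgt Q c) ! i = Some b2 then 1 else 0)"
    if c: "src Q c = y" for c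
    unfolding Th_def c by (subst lmat_mult_ind[OF distinct_labI sb1]) (use par in simp)
  have Imt_ind: "(Imt x c :: 'k mat) *\<^sub>v ind (labI x y) (Some b1) = 0\<^sub>v (dI (tgt Q c))"
    if c: "src Q c = y" "c \<noteq> b1" for c
    unfolding Imt_def c(1) by (subst lmat_mult_ind[OF distinct_labI sb1]) (use c in \<open>auto intro!: eq_vecI\<close>)
  have t3: "tgt Q b3 \<in> verts Q" and t2: "tgt Q b2 \<in> verts Q" using fq b by (auto simp: finite_quiver_def)
  have rt3: "r (tgt Q b3) \<in> carrier_mat (dP (tgt Q b3)) (dP (tgt Q b3) + dI (tgt Q b3))"
    using r t3 by (simp add: rep_hom_def ER_def PR_def)
  have "Em b3 *\<^sub>v u = (0\<^sub>v (dP (tgt Q b3) + dI (tgt Q b3)) :: 'k vec)"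
  proof -
    have "(Th b3 :: 'k mat) *\<^sub>v ind (labI x y) (Some b1) = 0\<^sub>v (dP (tgt Q b3))"
      using Th_ind[of b3] b dist by (auto intro!: eq_vecI)
    then have "Em b3 *\<^sub>v u = (0\<^sub>v (dP (tgt Q b3)) @\<^sub>v 0\<^sub>v (dI (tgt Q b3)) :: 'k vec)"
      using Emu[of b3] Imt_ind[of b3] b dist by simp
    also have "\<dots> = 0\<^sub>v (dP (tgt Q b3) + dI (tgt Q b3))" by (rule eq_vecI) auto
    finally show ?thesis .
  qed
  then have "Pm y b3 *\<^sub>v p = 0\<^sub>v (dP (tgt Q b3))"
    using ER_hom_vec[OF r b(3), of u] b uc rt3 unfolding p_def by simp
  moreover have "Some b3 \<in> set (labP y (tgt Q b3))" using b by (auto simp: set_labP)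
  then obtain k3 where k3: "k3 < dP (tgt Q b3)" "labP y (tgt Q b3) ! k3 = Some b3" by (auto simp: in_set_conv_nth)
  ultimately have p0: "p $ 0 = 0" using Pm_entry[OF _ k3(1), of p] pc b k3 by simp
  have "Some b2 \<in> set (labP y (tgt Q b2))" using b by (auto simp: set_labP)
  then obtain k2 where k2: "k2 < dP (tgt Q b2)" "labP y (tgt Q b2) ! k2 = Some b2" by (auto simp: in_set_conv_nth)
  have "Em b2 *\<^sub>v u = (ind (labP y (tgt Q b2)) (Some b2) @\<^sub>v 0\<^sub>v (dI (tgt Q b2)) :: 'k vec)"
  proof -
    have "(Th b2 :: 'k mat) *\<^sub>v ind (labI x y) (Some b1) = ind (labP y (tgt Q b2)) (Some b2)"
      using Th_ind[of b2] b by (auto intro!: eq_vecI)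
    then show ?thesis using Emu[of b2] Imt_ind[of b2] b dist by simp
  qed
  also have "\<dots> = fE (tgt Q b2) *\<^sub>v ind (labP y (tgt Q b2)) (Some b2)" by (rule fE_vec[symmetric]) simp
  finally have "Pm y b2 *\<^sub>v p = ind (labP y (tgt Q b2)) (Some b2)"
    using ER_hom_vec[OF r b(2), of u] b uc r_fE[OF r rf t2, of "ind (labP y (tgt Q b2)) (Some b2)"]
    unfolding p_def by simp
  then have "p $ 0 = 1" using Pm_entry[OF _ k2(1), of p] pc b k2 by simp
  with p0 show False by simp
qed


lemma nonsplit_in:
  assumes b: "b1 \<in> arrs Q" "b2 \<in> arrs Q" "b3 \<in> arrs Q" "tgt Q b1 = x" "tgt Q b2 = x" "tgt Q b3 = x"
    and dist: "b1 \<noteq> b2" "b1 \<noteq> b3" "b2 \<noteq> b3"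
    and par: "y = src Q b1" "c0 = b2" "\<beta> = b2" "\<gamma> = b1"
  shows "\<not> ses_splits Q (PR y) (ER :: ('v,'a,'k::field) rep) fE"
proof
  assume "ses_splits Q (PR y) (ER :: ('v,'a,'k) rep) fE"
  then obtain r where r: "rep_hom Q (ER :: ('v,'a,'k) rep) (PR y) r"
    and rf: "\<forall>v\<in>verts Q. r v * fE v = 1\<^sub>m (fst (PR y :: ('v,'a,'k) rep) v)"
    unfolding ses_splits_def by blast
  define nI :: "'k vec" where "nI = ind (labI x x) None"
  have nIc: "nI \<in> carrier_vec (dI x)" by (simp add: nI_def)
  have Emc: "Em c *\<^sub>v (0\<^sub>v (dP (src Q c)) @\<^sub>v ind (labI x (src Q c)) (Some c)) =
      ((Th c :: 'k mat) *\<^sub>v ind (labI x (src Q c)) (Some c)) @\<^sub>v nI"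
    if c: "c \<in> arrs Q" "tgt Q c = x" for c
  proof -
    have sc: "Some c \<in> set (labI x (src Q c))" using c by (auto simp: set_labI)
    have "Em c *\<^sub>v (0\<^sub>v (dP (src Q c)) @\<^sub>v ind (labI x (src Q c)) (Some c)) =
      (Pm y c *\<^sub>v 0\<^sub>v (dP (src Q c)) + (Th c :: 'k mat) *\<^sub>v ind (labI x (src Q c)) (Some c)) @\<^sub>v
      (Imt x c *\<^sub>v ind (labI x (src Q c)) (Some c))"
      by (rule Em_vec) simp_all
    also have "Pm y c *\<^sub>v 0\<^sub>v (dP (src Q c)) = (0\<^sub>v (dP (tgt Q c)) :: 'k vec)"
      by (rule mult_mat_vec_zero_right[OF Pm_carrier])
    also have "0\<^sub>v (dP (tgt Q c)) + (Th c :: 'k mat) *\<^sub>v ind (labI x (src Q c)) (Some c) = Th c *\<^sub>v ind (labI x (src Q c)) (Some c)"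
      by (rule left_zero_vec) simp
    also have "(Imt x c :: 'k mat) *\<^sub>v ind (labI x (src Q c)) (Some c) = nI"
      unfolding Imt_def nI_def c(2)
      by (subst lmat_mult_ind[OF distinct_labI sc]) (auto simp: ind_def)
    finally show ?thesis .
  qed
  have s2: "src Q b2 \<in> verts Q" and s3: "src Q b3 \<in> verts Q" using fq b by (auto simp: finite_quiver_def)
  have sb2: "Some b2 \<in> set (labI x (src Q b2))" and sb3: "Some b3 \<in> set (labI x (src Q b3))"
    using b by (auto simp: set_labI)
  have Th3: "(Th b3 :: 'k mat) *\<^sub>v ind (labI x (src Q b3)) (Some b3) = 0\<^sub>v (dP x)"
    unfolding Th_def b(6) by (subst lmat_mult_ind[OF distinct_labI sb3]) (use dist par in \<open>auto intro!: eq_vecI\<close>)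
  have Th2: "(Th b2 :: 'k mat) *\<^sub>v ind (labI x (src Q b2)) (Some b2) = ind (labP y x) (Some b1)"
    unfolding Th_def b(5) by (subst lmat_mult_ind[OF distinct_labI sb2]) (use par in \<open>auto simp: ind_def\<close>)
  define w :: "'k vec" where "w = 0\<^sub>v (dP (src Q b3)) @\<^sub>v ind (labI x (src Q b3)) (Some b3)"
  define u :: "'k vec" where "u = 0\<^sub>v (dP (src Q b2)) @\<^sub>v ind (labI x (src Q b2)) (Some b2)"
  have wc: "w \<in> carrier_vec (dP (src Q b3) + dI (src Q b3))" unfolding w_def by (rule append_carrier_vec) auto
  have uc: "u \<in> carrier_vec (dP (src Q b2) + dI (src Q b2))" unfolding u_def by (rule append_carrier_vec) auto
  have rs3: "r (src Q b3) \<in> carrier_mat (dP (src Q b3)) (dP (src Q b3) + dI (src Q b3))"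
    using r s3 by (simp add: rep_hom_def ER_def PR_def)
  have rs2: "r (src Q b2) \<in> carrier_mat (dP (src Q b2)) (dP (src Q b2) + dI (src Q b2))"
    using r s2 by (simp add: rep_hom_def ER_def PR_def)
  have rx: "r x \<in> carrier_mat (dP x) (dP x + dI x)" using r xv by (simp add: rep_hom_def ER_def PR_def)
  define q3 where "q3 = r (src Q b3) *\<^sub>v w"
  define q2 where "q2 = r (src Q b2) *\<^sub>v u"
  have q3c: "q3 \<in> carrier_vec (dP (src Q b3))" unfolding q3_def using rs3 wc by simp
  have q2c: "q2 \<in> carrier_vec (dP (src Q b2))" unfolding q2_def using rs2 uc by simp
  have e3: "r x *\<^sub>v (0\<^sub>v (dP x) @\<^sub>v nI) = Pm y b3 *\<^sub>v q3"
    using ER_hom_vec[OF r b(3) wc] Emc[OF b(3) b(6)] Th3 b(6) unfolding q3_def w_def by simp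
  have e2: "r x *\<^sub>v (ind (labP y x) (Some b1) @\<^sub>v nI) = Pm y b2 *\<^sub>v q2"
    using ER_hom_vec[OF r b(2) uc] Emc[OF b(2) b(5)] Th2 b(5) unfolding q2_def u_def by simp
  have split: "ind (labP y x) (Some b1) @\<^sub>v nI = fE x *\<^sub>v ind (labP y x) (Some b1) + (0\<^sub>v (dP x) @\<^sub>v nI)"
  proof -
    have "fE x *\<^sub>v ind (labP y x) (Some b1) = (ind (labP y x) (Some b1) @\<^sub>v 0\<^sub>v (dI x) :: 'k vec)"
      by (rule fE_vec) simp
    moreover have "(ind (labP y x) (Some b1) @\<^sub>v 0\<^sub>v (dI x)) + (0\<^sub>v (dP x) @\<^sub>v nI) =
        (ind (labP y x) (Some b1) + 0\<^sub>v (dP x)) @\<^sub>v (0\<^sub>v (dI x) + nI)"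
      by (rule append_vec_add[of _ "dP x" _ _ "dI x"]) (use nIc in simp_all)
    ultimately show ?thesis using nIc by simp
  qed
  have "r x *\<^sub>v (ind (labP y x) (Some b1) @\<^sub>v nI) =
      r x *\<^sub>v (fE x *\<^sub>v ind (labP y x) (Some b1)) + r x *\<^sub>v (0\<^sub>v (dP x) @\<^sub>v nI)"
    unfolding split by (rule mult_add_distrib_mat_vec[OF rx])
      (use nIc mult_mat_vec_carrier[OF fE_carrier[of x], of "ind (labP y x) (Some b1)"] in simp_all)
  also have "r x *\<^sub>v (fE x *\<^sub>v ind (labP y x) (Some b1)) = ind (labP y x) (Some b1)"
    by (rule r_fE[OF r rf xv]) simp
  finally have eq: "ind (labP y x) (Some b1) + Pm y b3 *\<^sub>v q3 = Pm y b2 *\<^sub>v q2" using e2 e3 by simp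
  have "Some b1 \<in> set (labP y x)" using b par by (auto simp: set_labP)
  then obtain k1 where k1: "k1 < dP x" "labP y x ! k1 = Some b1" by (auto simp: in_set_conv_nth)
  have "(ind (labP y x) (Some b1) + Pm y b3 *\<^sub>v q3) $ k1 = (Pm y b2 *\<^sub>v q2) $ k1" using eq by simp
  moreover have "(Pm y b3 *\<^sub>v q3) $ k1 = 0" using Pm_entry[OF q3c, of k1] k1 b dist by simp
  moreover have "(Pm y b2 *\<^sub>v q2) $ k1 = 0" using Pm_entry[OF q2c, of k1] k1 b dist by simp
  moreover have "(ind (labP y x) (Some b1) + Pm y b3 *\<^sub>v q3) $ k1 = ind (labP y x) (Some b1) $ k1 + (Pm y b3 *\<^sub>v q3) $ k1"
    using k1 q3c b by simp
  ultimately show False using k1 by simp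
qed

end




context qext
begin

lemma nct_contra:
  assumes n2: "2 \<le> n" and nct: "n_cluster_tilting Q n (\<C> :: ('v,'a,'k::field) rep set)"
    and ns: "\<not> ses_splits Q (PR y) (ER :: ('v,'a,'k) rep) fE"
  shows False
proof -
  from nct have ff: "functorially_finite Q \<C>"
    and eq1: "\<C> = {X. is_rep Q X \<and> (\<forall>i. 0 < i \<and> i < n \<longrightarrow> (\<forall>C\<in>\<C>. ext_zero Q i X C))}"
    and eq2: "\<C> = {X. is_rep Q X \<and> (\<forall>i. 0 < i \<and> i < n \<longrightarrow> (\<forall>C\<in>\<C>. ext_zero Q i C X))}"
    unfolding n_cluster_tilting_def by auto
  have Crep: "\<And>C. C \<in> \<C> \<Longrightarrow> is_rep Q C" using ff unfolding functorially_finite_def by auto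
  have Pin: "(PR y :: ('v,'a,'k) rep) \<in> \<C>"
  proof -
    have "ext_zero Q i (PR y :: ('v,'a,'k) rep) C" if i0: "0 < i" for i C
    proof -
      obtain i' where i: "i = Suc i'" using i0 by (cases i) auto
      show ?thesis unfolding i by (rule proj_ext_zero[OF fq PR_proj[OF yv]])
    qed
    then show ?thesis using PR_rep[OF yv] by (subst eq1) auto
  qed
  have Iin: "(IR x :: ('v,'a,'k) rep) \<in> \<C>"
  proof -
    have "ext_zero Q i C (IR x :: ('v,'a,'k) rep)" if i: "0 < i" "i < n" and C: "C \<in> \<C>" for i C
    proof -
      have "ext_zero Q i C (PR y :: ('v,'a,'k) rep)" using C Pin i by (subst (asm) eq1) auto
      moreover obtain i' where i': "i = Suc i'" using i by (cases i) auto
      ultimately show ?thesis using ext_zero_transfer[OF IR_inj[OF xv]] by blast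
    qed
    then show ?thesis using IR_rep[OF xv] by (subst eq2) auto
  qed
  have "(IR x :: ('v,'a,'k) rep) \<in> {X. is_rep Q X \<and> (\<forall>i. 0 < i \<and> i < n \<longrightarrow> (\<forall>C\<in>\<C>. ext_zero Q i X C))}"
    using Iin eq1 by blast
  then have "\<forall>i. 0 < i \<and> i < n \<longrightarrow> (\<forall>C\<in>\<C>. ext_zero Q i (IR x :: ('v,'a,'k) rep) C)" by blast
  then have "ext_zero Q (Suc 0) (IR x :: ('v,'a,'k) rep) (PR y)" using Pin n2 by force
  then have "ses_splits Q (PR y) (ER :: ('v,'a,'k) rep) fE"
    using ER_ses unfolding ext_zero.simps(2) by blast
  with ns show False by simp
qed

end

lemma three_elems:
  assumes "finite S" and "2 < card S"
  obtains a b c where "a \<in> S" "b \<in> S" "c \<in> S" "a \<noteq> b" "a \<noteq> c" "b \<noteq> c"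
proof -
  obtain T where T: "T \<subseteq> S" "card T = 3" using obtain_subset_with_card_n[of 3 S] assms by auto
  then obtain a b c where "T = {a,b,c}" "a \<noteq> b" "b \<noteq> c" "a \<noteq> c" using card_3_iff by metis
  then show ?thesis using that T by auto
qed

theorem lemma2p1:
  fixes Q :: "('v,'a) quiver" and n :: nat and \<C> :: "('v,'a,'k::field) rep set"
  assumes "finite_quiver Q" and "connected_quiver Q" and "n \<ge> 2"
    and "n_cluster_tilting Q n \<C>"
  shows "\<forall>v\<in>verts Q. in_degree Q v \<le> 2 \<and> out_degree Q v \<le> 2"
proof (rule ccontr)
  assume "\<not> ?thesis"
  then obtain v where v: "v \<in> verts Q" and deg: "2 < in_degree Q v \<or> 2 < out_degree Q v" by auto
  have fq: "finite_quiver Q" by fact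
  have fa: "finite (arrs Q)" using fq by (simp add: finite_quiver_def)
  obtain al where al: "set al = arrs Q" "distinct al" using finite_distinct_list[OF fa] by blast
  interpret qs Q al by unfold_locales (use fq al in auto)
  from deg show False
  proof
    assume "2 < in_degree Q v"
    then obtain b1 b2 b3 where b: "b1 \<in> {a \<in> arrs Q. tgt Q a = v}" "b2 \<in> {a \<in> arrs Q. tgt Q a = v}"
      "b3 \<in> {a \<in> arrs Q. tgt Q a = v}" and d: "b1 \<noteq> b2" "b1 \<noteq> b3" "b2 \<noteq> b3"
      using three_elems[of "{a \<in> arrs Q. tgt Q a = v}"] fa unfolding in_degree_def by auto
    have yv: "src Q b1 \<in> verts Q" using fq b by (auto simp: finite_quiver_def)
    interpret qext Q al "src Q b1" v b2 b2 b1 by unfold_locales (use yv v in auto)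
    have "\<not> ses_splits Q (PR (src Q b1)) (ER :: ('v,'a,'k) rep) fE"
      by (rule nonsplit_in) (use b d in auto)
    then show False using nct_contra assms by blast
  next
    assume "2 < out_degree Q v"
    then obtain b1 b2 b3 where b: "b1 \<in> {a \<in> arrs Q. src Q a = v}" "b2 \<in> {a \<in> arrs Q. src Q a = v}"
      "b3 \<in> {a \<in> arrs Q. src Q a = v}" and d: "b1 \<noteq> b2" "b1 \<noteq> b3" "b2 \<noteq> b3"
      using three_elems[of "{a \<in> arrs Q. src Q a = v}"] fa unfolding out_degree_def by auto
    have xv: "tgt Q b1 \<in> verts Q" using fq b by (auto simp: finite_quiver_def)
    interpret qext Q al v "tgt Q b1" b2 b1 b2 by unfold_locales (use xv v in auto)
    have "\<not> ses_splits Q (PR v) (ER :: ('v,'a,'k) rep) fE"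
      by (rule nonsplit_out) (use b d in auto)
    then show False using nct_contra assms by blast
  qed
qed


end
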